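(* Let $N=2$ and let $F$ be a marginal distribution on $[0,1]$ as described in the context, with density $f$ on $(0,1)$ and point mass $\Pr(1)$ at $1$. Suppose the robust-version regularity conditions hold: $x^2 f(x)$ is non-decreasing on $(0,1)$ and $\Pr(1)\ge \int_{(0,1)} x^2 f(x)\,dx$. Then the Second Price Auction with Uniformly Distributed Reserves $(q^*,t^* )$ and the Adversarial Correlation Structure $\pi^*$ form a Nash equilibrium (saddle point) of the zero-sum game between the auctioneer, who chooses a DSIC and EPIR mechanism, and Nature, who chooses $\pi\in\Pi(F)$; that is, $\pi^*\in\Pi(F)$ and $$U((q^*,t^* ),\pi)\ \ge\ U((q^*,t^* ),\pi^* )\ \ge\ U((q,t),\pi^* )$$ for every $\pi\in\Pi(F)$ and every DSIC and EPIR mechanism $(q,t)$. Moreover, the revenue guarantee of $(q^*,t^* )$, i.e. $\inf_{\pi\in\Pi(F)}U((q^*,t^* ),\pi)$, equals $E[X^2]$ where $X\sim F$.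
   Context: A single indivisible good is sold to two risk-neutral bidders with private values $v_1,v_2\in[0,1]$. Both bidders' values have the same marginal cumulative distribution function $F$ on $[0,1]$ whose support is $[0,1]$; $F$ may have point masses at $0$ and at $1$ and is absolutely continuous on $(0,1)$ with density $f$; $\Pr(1)$ denotes the probability mass of $F$ at $1$ (if $F$ has a point mass at $0$, write $f(0)$ for $\Pr(0)$). $\Pi(F)$ is the set of Borel probability measures on $[0,1]^2$ both of whose one-dimensional marginals equal $F$. A (direct) mechanism is a pair $(q,t)$ with $q:[0,1]^2\to[0,1]^2$, $q_1(v)+q_2(v)\le 1$, and $t:[0,1]^2\to\mathbb{R}^2$. It is DSIC if $v_iq_i(v)-t_i(v)\ge v_iq_i(v_i',v_{-i})-t_i(v_i',v_{-i})$ for all $i,v,v_i'$, and EPIR if $v_iq_i(v)-t_i(v)\ge 0$ for all $i,v$. The expected revenue of $(q,t)$ under $\pi$ is $U((q,t),\pi)=\int_{[0,1]^2}(t_1(v)+t_2(v))\,d\pi(v)$. Second Price Auction with Uniformly Distributed Reserves $(q^*,t^* )$: if $v_1>v_2$, then $q_1^*=v_1$, $q_2^*=0$, $t_1^*=\frac{v_1^2+v_2^2}{2}$, $t_2^*=0$; symmetrically if $v_2>v_1$; if $v_1=v_2=v$, then $q_1^*=q_2^*=\frac v2$ and $t_1^*=t_2^*=\frac{v^2}{2}$. Adversarial Correlation Structure $\pi^*$: a symmetric distribution on $[0,1]^2$ which places all the marginal weight of $F$ at $0$ on the profile $(0,0)$ (weight $f(0)$ there), places no weight on profiles where exactly one value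 is $0$, has density $\pi^*(v_1,v_2)=\pi^*(v_2,v_1)=\frac{1}{v_1^2}\Big(v_2f(v_2)-\frac{\int_0^{v_2}s^2f(s)\,ds}{v_2^2}\Big)$ (w.r.t. two-dimensional Lebesgue measure) for $0<v_2\le v_1<1$, has one-dimensional density $v_2f(v_2)-\frac{\int_0^{v_2}s^2f(s)\,ds}{v_2^2}$ (w.r.t. $dv_2$) on the segment $\{1\}\times(0,1)$ and symmetrically on $(0,1)\times\{1\}$, and has a point mass $\Pr(1)-\int_{(0,1)}s^2f(s)\,ds$ at $(1,1)$. *)

theory Defs
  imports "HOL-Probability.Probability"
begin

text \<open>Profiles v = (v1, v2) :: real \<times> real. A mechanism is a pair (q, t) of functions
  real \<times> real \<Rightarrow> real \<times> real; the first/second component is bidder 1/2.\<close>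

definition feasible :: "(real \<times> real \<Rightarrow> real \<times> real) \<Rightarrow> bool" where
  "feasible q \<longleftrightarrow> (\<forall>v1\<in>{0..1}. \<forall>v2\<in>{0..1}.
      0 \<le> fst (q (v1, v2)) \<and> 0 \<le> snd (q (v1, v2)) \<and> fst (q (v1, v2)) + snd (q (v1, v2)) \<le> 1)"

definition DSIC :: "(real \<times> real \<Rightarrow> real \<times> real) \<Rightarrow> (real \<times> real \<Rightarrow> real \<times> real) \<Rightarrow> bool" where
  "DSIC q t \<longleftrightarrow> (\<forall>v1\<in>{0..1}. \<forall>v2\<in>{0..1}. \<forall>w\<in>{0..1}.
      v1 * fst (q (v1, v2)) - fst (t (v1, v2)) \<ge> v1 * fst (q (w, v2)) - fst (t (w, v2)) \<and>
      v2 * snd (q (v1, v2)) - snd (t (v1, v2)) \<ge> v2 * snd (q (v1, w)) - snd (t (v1, w)))"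

definition EPIR :: "(real \<times> real \<Rightarrow> real \<times> real) \<Rightarrow> (real \<times> real \<Rightarrow> real \<times> real) \<Rightarrow> bool" where
  "EPIR q t \<longleftrightarrow> (\<forall>v1\<in>{0..1}. \<forall>v2\<in>{0..1}.
      v1 * fst (q (v1, v2)) - fst (t (v1, v2)) \<ge> 0 \<and>
      v2 * snd (q (v1, v2)) - snd (t (v1, v2)) \<ge> 0)"

definition DSIC_EPIR_mechanism ::
  "(real \<times> real \<Rightarrow> real \<times> real) \<Rightarrow> (real \<times> real \<Rightarrow> real \<times> real) \<Rightarrow> bool" where
  "DSIC_EPIR_mechanism q t \<longleftrightarrow> feasible q \<and> DSIC q t \<and> EPIR q t"

definition revenue :: "(real \<times> real \<Rightarrow> real \<times> real) \<Rightarrow> (real \<times> real) measure \<Rightarrow> real" where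
  "revenue t \<pi> = (\<integral>v. fst (t v) + snd (t v) \<partial>\<pi>)"

definition PiF :: "real measure \<Rightarrow> (real \<times> real) measure set" where
  "PiF F = {\<pi>. prob_space \<pi> \<and> sets \<pi> = sets (borel :: (real \<times> real) measure) \<and>
               distr \<pi> borel fst = F \<and> distr \<pi> borel snd = F}"

definition qstar :: "real \<times> real \<Rightarrow> real \<times> real" where
  "qstar v = (let v1 = fst v; v2 = snd v in
     if v1 > v2 then (v1, 0) else if v2 > v1 then (0, v2) else (v1 / 2, v1 / 2))"

definition tstar :: "real \<times> real \<Rightarrow> real \<times> real" where
  "tstar v = (let v1 = fst v; v2 = snd v in
     if v1 > v2 then ((v1^2 + v2^2) / 2, 0)
     else if v2 > v1 then (0, (v1^2 + v2^2) / 2)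
     else (v1^2 / 2, v1^2 / 2))"

definition gstar :: "(real \<Rightarrow> real) \<Rightarrow> real \<Rightarrow> real" where
  "gstar f v = v * f v - (LINT s:{0<..<v}|lborel. s^2 * f s) / v^2"

definition pistar_dens :: "(real \<Rightarrow> real) \<Rightarrow> real \<times> real \<Rightarrow> real" where
  "pistar_dens f v = (let v1 = fst v; v2 = snd v in
     if 0 < v2 \<and> v2 \<le> v1 \<and> v1 < 1 then gstar f v2 / v1^2
     else if 0 < v1 \<and> v1 < v2 \<and> v2 < 1 then gstar f v1 / v2^2
     else 0)"

definition pistar :: "real measure \<Rightarrow> (real \<Rightarrow> real) \<Rightarrow> (real \<times> real) measure" where
  "pistar F f = measure_of UNIV (sets (borel :: (real \<times> real) measure))
     (\<lambda>A. ennreal (measure F {0}) * indicator A (0, 0)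
        + (\<integral>\<^sup>+ v. indicator A v * ennreal (pistar_dens f v) \<partial>lborel)
        + (\<integral>\<^sup>+ y. indicator A (1, y) * indicator {0<..<1} y * ennreal (gstar f y) \<partial>lborel)
        + (\<integral>\<^sup>+ x. indicator A (x, 1) * indicator {0<..<1} x * ennreal (gstar f x) \<partial>lborel)
        + ennreal (measure F {1} - (LINT s:{0<..<1}|lborel. s^2 * f s)) * indicator A (1, 1))"

end

theory Submission
  imports Defs
begin

definition madd :: "'a measure \<Rightarrow> 'a measure \<Rightarrow> 'a measure" where
  "madd M N = measure_of (space M) (sets M) (\<lambda>A. emeasure M A + emeasure N A)"

lemma sets_madd[simp]: "sets (madd M N) = sets M"
  unfolding madd_def by (simp add: sets.sigma_sets_eq)

lemma space_madd[simp]: "space (madd M N) = space M"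
  unfolding madd_def by (simp add: sets.space_closed)

lemma emeasure_madd:
  assumes N: "sets N = sets M" and A: "A \<in> sets M"
  shows "emeasure (madd M N) A = emeasure M A + emeasure N A"
  unfolding madd_def
proof (rule emeasure_measure_of_sigma[OF sets.sigma_algebra_axioms _ _ A])
  show "positive (sets M) (\<lambda>A. emeasure M A + emeasure N A)"
    by (simp add: positive_def)
  show "countably_additive (sets M) (\<lambda>A. emeasure M A + emeasure N A)"
    unfolding countably_additive_def
  proof (intro allI impI)
    fix B :: "nat \<Rightarrow> _" assume B: "range B \<subseteq> sets M" "disjoint_family B" "\<Union> (range B) \<in> sets M"
    have B': "range B \<subseteq> sets N" using B N by simp
    have "(\<Sum>i. emeasure M (B i) + emeasure N (B i)) = (\<Sum>i. emeasure M (B i)) + (\<Sum>i. emeasure N (B i))"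
      by (rule suminf_add[symmetric]) auto
    also have "\<dots> = emeasure M (\<Union> (range B)) + emeasure N (\<Union> (range B))"
      using suminf_emeasure[OF B(1,2)] suminf_emeasure[OF B' B(2)] by simp
    finally show "(\<Sum>i. emeasure M (B i) + emeasure N (B i)) = emeasure M (\<Union> (range B)) + emeasure N (\<Union> (range B))" .
  qed
qed

lemma nn_integral_madd:
  assumes N: "sets N = sets M" and f: "f \<in> borel_measurable M"
  shows "(\<integral>\<^sup>+x. f x \<partial>madd M N) = (\<integral>\<^sup>+x. f x \<partial>M) + (\<integral>\<^sup>+x. f x \<partial>N)"
  using f
proof induction
  case (cong f g)
  have sp: "space N = space M" using N by (rule sets_eq_imp_space_eq)
  have "(\<integral>\<^sup>+x. f x \<partial>madd M N) = (\<integral>\<^sup>+x. g x \<partial>madd M N)"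
    by (rule nn_integral_cong) (use cong in auto)
  moreover have "(\<integral>\<^sup>+x. f x \<partial>M) = (\<integral>\<^sup>+x. g x \<partial>M)"
    by (rule nn_integral_cong) (use cong in auto)
  moreover have "(\<integral>\<^sup>+x. f x \<partial>N) = (\<integral>\<^sup>+x. g x \<partial>N)"
    by (rule nn_integral_cong) (use cong sp in auto)
  ultimately show ?case using cong by simp
next
  case (set A)
  then show ?case using N by (simp add: emeasure_madd)
next
  case (mult u c)
  have mN: "u \<in> borel_measurable N" using mult N by (simp cong: measurable_cong_sets)
  have mS: "u \<in> borel_measurable (madd M N)" using mult by (simp cong: measurable_cong_sets)
  show ?case using mult
    by (simp add: nn_integral_cmult mN mS distrib_left)
next
  case (add u v)
  have mN: "u \<in> borel_measurable N" "v \<in> borel_measurable N" using add N by (simp_all cong: measurable_cong_sets)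
  have mS: "u \<in> borel_measurable (madd M N)" "v \<in> borel_measurable (madd M N)" using add by (simp_all cong: measurable_cong_sets)
  show ?case using add mN mS
    by (simp add: nn_integral_add algebra_simps)
next
  case (seq U)
  have mN: "\<And>i. U i \<in> borel_measurable N" using seq N by (simp cong: measurable_cong_sets)
  have mS: "\<And>i. U i \<in> borel_measurable (madd M N)" using seq by (simp cong: measurable_cong_sets)
  have "(\<integral>\<^sup>+x. (SUP i. U i) x \<partial>madd M N) = (SUP i. \<integral>\<^sup>+x. U i x \<partial>madd M N)"
    using nn_integral_monotone_convergence_SUP[OF \<open>incseq U\<close> mS] by (simp add: image_comp)
  also have "\<dots> = (SUP i. (\<integral>\<^sup>+x. U i x \<partial>M) + (\<integral>\<^sup>+x. U i x \<partial>N))"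
    using seq by simp
  also have "\<dots> = (SUP i. \<integral>\<^sup>+x. U i x \<partial>M) + (SUP i. \<integral>\<^sup>+x. U i x \<partial>N)"
    by (rule ennreal_SUP_add) (auto intro!: incseq_nn_integral \<open>incseq U\<close>)
  also have "\<dots> = (\<integral>\<^sup>+x. (SUP i. U i) x \<partial>M) + (\<integral>\<^sup>+x. (SUP i. U i) x \<partial>N)"
    using nn_integral_monotone_convergence_SUP[OF \<open>incseq U\<close> seq(1)]
      nn_integral_monotone_convergence_SUP[OF \<open>incseq U\<close> mN] by (simp add: image_comp)
  finally show ?case .
qed

definition clmp :: "real \<Rightarrow> real" where "clmp x = max 0 (min 1 x)"

lemma clmp_id[simp]: "x \<in> {0..1} \<Longrightarrow> clmp x = x"
  by (auto simp: clmp_def)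

lemma clmp_range: "clmp x \<in> {0..1}"
  by (auto simp: clmp_def)

lemma clmp_mono: "mono clmp"
  by (auto simp: clmp_def mono_def)

lemma clmp_meas[measurable]: "clmp \<in> borel_measurable borel"
  unfolding clmp_def by measurable

definition dsic1 :: "(real \<Rightarrow> real) \<Rightarrow> (real \<Rightarrow> real) \<Rightarrow> bool" where
  "dsic1 Q H \<longleftrightarrow> (\<forall>x\<in>{0..1}. \<forall>w\<in>{0..1}. x * Q x - H x \<ge> x * Q w - H w) \<and>
     (\<forall>x\<in>{0..1}. x * Q x - H x \<ge> 0 \<and> 0 \<le> Q x \<and> Q x \<le> 1)"

lemma dsic1_D:
  assumes "dsic1 Q H" "x \<in> {0..1}" "w \<in> {0..1}"
  shows "x * Q x - H x \<ge> x * Q w - H w" "x * Q x - H x \<ge> 0" "0 \<le> Q x" "Q x \<le> 1"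
  using assms unfolding dsic1_def by auto

lemma dsic1_Qmono:
  assumes d: "dsic1 Q H" and "w \<in> {0..1}" "x \<in> {0..1}" "w \<le> x"
  shows "Q w \<le> Q x"
proof (cases "w = x")
  case False
  have "x * Q x - H x \<ge> x * Q w - H w" "w * Q w - H w \<ge> w * Q x - H x"
    using dsic1_D(1)[OF d] assms by auto
  then have "(x - w) * (Q x - Q w) \<ge> 0" by (simp add: algebra_simps)
  moreover have "x - w > 0" using False assms by simp
  ultimately show ?thesis by (simp add: zero_le_mult_iff)
qed simp

lemma dsic1_Hmono:
  assumes d: "dsic1 Q H" and "w \<in> {0..1}" "x \<in> {0..1}" "w \<le> x"
  shows "H w \<le> H x"
proof -
  have "w * Q w - H w \<ge> w * Q x - H x" using dsic1_D(1)[OF d] assms by auto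
  moreover have "Q w \<le> Q x" using dsic1_Qmono[OF assms] .
  moreover have "w \<ge> 0" using assms by simp
  ultimately have "H x - H w \<ge> w * (Q x - Q w)" by (simp add: algebra_simps)
  moreover have "w * (Q x - Q w) \<ge> 0" using \<open>Q w \<le> Q x\<close> \<open>w \<ge> 0\<close> by simp
  ultimately show ?thesis by simp
qed

lemma dsic1_clmp:
  assumes "dsic1 Q H" shows "dsic1 (\<lambda>x. Q (clmp x)) (\<lambda>x. H (clmp x))"
  using assms unfolding dsic1_def by simp

lemma dsic1_meas:
  assumes d: "dsic1 Q H"
  shows "(\<lambda>x. Q (clmp x)) \<in> borel_measurable borel" "(\<lambda>x. H (clmp x)) \<in> borel_measurable borel"
proof -
  have "mono (\<lambda>x. Q (clmp x))"
    unfolding mono_def using dsic1_Qmono[OF d] clmp_range clmp_mono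
    by (metis monoD)
  then show "(\<lambda>x. Q (clmp x)) \<in> borel_measurable borel" by (rule borel_measurable_mono)
  have "mono (\<lambda>x. H (clmp x))"
    unfolding mono_def using dsic1_Hmono[OF d] clmp_range clmp_mono
    by (metis monoD)
  then show "(\<lambda>x. H (clmp x)) \<in> borel_measurable borel" by (rule borel_measurable_mono)
qed

lemma envelope:
  assumes d: "dsic1 Q H" and Qm[measurable]: "Q \<in> borel_measurable borel" and x: "x \<in> {0..1}"
  shows "(\<integral>\<^sup>+ s. ennreal (Q s) * indicator {0..x} s \<partial>lborel) \<le> ennreal (x * Q x - H x)"
proof -
  define U where "U z = z * Q z - H z" for z
  define \<Phi> where "\<Phi> z = (\<integral>\<^sup>+ s. ennreal (Q s) * indicator {0..z} s \<partial>lborel)" for z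
  have Uinc: "U z \<ge> U w + (z - w) * Q w" if "z \<in> {0..1}" "w \<in> {0..1}" for z w
    using dsic1_D(1)[OF d that] unfolding U_def by (simp add: algebra_simps)
  have U0: "U z \<ge> 0" if "z \<in> {0..1}" for z using dsic1_D(2)[OF d that that] unfolding U_def by simp
  have Qb: "0 \<le> Q z" "Q z \<le> 1" if "z \<in> {0..1}" for z using dsic1_D(3,4)[OF d that that] by auto
  have split: "\<Phi> z' \<le> \<Phi> z + ennreal ((z' - z) * Q z')" if "0 \<le> z" "z \<le> z'" "z' \<le> 1" for z z'
  proof -
    have "\<Phi> z' = (\<integral>\<^sup>+ s. ennreal (Q s) * indicator {0..z} s + ennreal (Q s) * indicator {z<..z'} s \<partial>lborel)"
      unfolding \<Phi>_def
      by (rule nn_integral_cong) (use that in \<open>auto simp: indicator_def\<close>)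
    also have "\<dots> = \<Phi> z + (\<integral>\<^sup>+ s. ennreal (Q s) * indicator {z<..z'} s \<partial>lborel)"
      unfolding \<Phi>_def by (rule nn_integral_add) auto
    also have "(\<integral>\<^sup>+ s. ennreal (Q s) * indicator {z<..z'} s \<partial>lborel)
        \<le> (\<integral>\<^sup>+ s. ennreal (Q z') * indicator {z<..z'} s \<partial>lborel)"
    proof (rule nn_integral_mono)
      fix s show "ennreal (Q s) * indicator {z<..z'} s \<le> ennreal (Q z') * indicator {z<..z'} s"
        using dsic1_Qmono[OF d, of s z'] that by (auto simp: indicator_def intro!: ennreal_leI)
    qed
    also have "\<dots> = ennreal (Q z') * ennreal (z' - z)"
      using that by (simp add: nn_integral_cmult_indicator)
    also have "\<dots> = ennreal ((z' - z) * Q z')"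
      using that Qb[of z'] by (simp add: ennreal_mult' mult.commute)
    finally show ?thesis by (simp add: add_mono)
  qed
  have main: "\<Phi> x \<le> ennreal (U x + 1 / real n)" if n: "n > 0" for n :: nat
  proof -
    define \<delta> where "\<delta> = x / real n"
    have \<delta>0: "\<delta> \<ge> 0" using x by (simp add: \<delta>_def)
    define s where "s k = real k * \<delta>" for k :: nat
    have s_in: "s k \<in> {0..1}" if "k \<le> n" for k
    proof -
      have e: "s k = x * (real k / real n)" unfolding s_def \<delta>_def by simp
      have a1: "real k / real n \<le> 1" using that n by simp
      have a0: "0 \<le> real k / real n" by simp
      have "x * (real k / real n) \<le> 1" using mult_le_one[OF _ a0 a1, of x] x by simp
      moreover have "0 \<le> x * (real k / real n)" using x a0 by simp
      ultimately show ?thesis unfolding e by simp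
    qed
    define C where "C = ennreal (U 0 + \<delta> * Q 0)"
    have claim: "\<Phi> (s k) + C \<le> ennreal (U (s k) + \<delta> * Q (s k))" if "k \<le> n" for k
      using that
    proof (induction k)
      case 0
      have "\<Phi> 0 = 0"
      proof -
        have "\<Phi> 0 = (\<integral>\<^sup>+ s. ennreal (Q s) * indicator {0} s \<partial>lborel)" unfolding \<Phi>_def by simp
        also have "\<dots> = 0" by simp
        finally show ?thesis .
      qed
      then show ?case by (simp add: s_def C_def)
    next
      case (Suc k)
      have k: "k \<le> n" "Suc k \<le> n" using Suc by auto
      have sS: "s (Suc k) = s k + \<delta>" unfolding s_def by (simp add: algebra_simps)
      have "\<Phi> (s (Suc k)) + C \<le> \<Phi> (s k) + ennreal (\<delta> * Q (s (Suc k))) + C"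
        using split[of "s k" "s (Suc k)"] s_in[OF k(1)] s_in[OF k(2)] sS \<delta>0
        by (auto intro: add_mono)
      also have "\<dots> = (\<Phi> (s k) + C) + ennreal (\<delta> * Q (s (Suc k)))" by (simp add: algebra_simps)
      also have "\<dots> \<le> ennreal (U (s k) + \<delta> * Q (s k)) + ennreal (\<delta> * Q (s (Suc k)))"
        using Suc.IH k by (auto intro: add_mono)
      also have "\<dots> = ennreal (U (s k) + \<delta> * Q (s k) + \<delta> * Q (s (Suc k)))"
        using U0[OF s_in[OF k(1)]] Qb[OF s_in[OF k(1)]] Qb[OF s_in[OF k(2)]] \<delta>0
        by (subst ennreal_plus) auto
      also have "\<dots> \<le> ennreal (U (s (Suc k)) + \<delta> * Q (s (Suc k)))"
        using Uinc[OF s_in[OF k(2)] s_in[OF k(1)]] sS by (intro ennreal_leI) (simp add: algebra_simps)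
      finally show ?case .
    qed
    have sn: "s n = x" using n unfolding s_def \<delta>_def by simp
    have "\<Phi> x \<le> \<Phi> x + C" by simp
    also have "\<dots> \<le> ennreal (U x + \<delta> * Q x)" using claim[of n] sn by simp
    also have "\<dots> \<le> ennreal (U x + 1 / real n)"
    proof (rule ennreal_leI)
      have "\<delta> * Q x \<le> \<delta> * 1" using Qb[OF x] \<delta>0 by (intro mult_left_mono) auto
      also have "\<delta> \<le> 1 / real n" unfolding \<delta>_def using x n by (simp add: divide_right_mono)
      finally show "U x + \<delta> * Q x \<le> U x + 1 / real n" by simp
    qed
    finally show ?thesis .
  qed
  have "\<Phi> x \<le> ennreal (U x)"
  proof (rule ennreal_le_epsilon)
    fix e :: real assume e: "0 < e"
    obtain n :: nat where n: "1 / e < real n" using reals_Archimedean2 by blast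
    have npos: "n > 0" using n e by (cases n) (auto simp: field_simps)
    have "1 / real n < e" using n e npos by (simp add: field_simps)
    have "\<Phi> x \<le> ennreal (U x + 1 / real n)" by (rule main[OF npos])
    also have "\<dots> \<le> ennreal (U x) + ennreal e"
    proof -
      have "ennreal (U x + 1 / real n) \<le> ennreal (U x + e)"
        using \<open>1 / real n < e\<close> by (intro ennreal_leI) simp
      also have "\<dots> = ennreal (U x) + ennreal e" using U0[OF x] e by (simp add: ennreal_plus)
      finally show ?thesis .
    qed
    finally show "\<Phi> x \<le> ennreal (U x) + ennreal e" .
  qed
  then show ?thesis by (simp add: \<Phi>_def U_def)
qed


lemma meas_ind_Ico[measurable (raw)]:
  fixes f g :: "'a \<Rightarrow> real"
  assumes [measurable]: "f \<in> borel_measurable M" "g \<in> borel_measurable M"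
  shows "(\<lambda>x. indicator {f x..<c} (g x) :: ennreal) \<in> borel_measurable M"
proof -
  have "(\<lambda>x. indicator {f x..<c} (g x) :: ennreal) = (\<lambda>x. if f x \<le> g x \<and> g x < c then 1 else 0)"
    by (auto simp: indicator_def)
  also have "\<dots> \<in> borel_measurable M" by measurable
  finally show ?thesis .
qed

lemma aux_add: "(X2::ennreal) \<le> Y + b \<Longrightarrow> X1 + (X2 + a) \<le> X1 + (Y + (b + a))"
  by (intro add_left_mono) (metis add.assoc add_right_mono)

lemma slice:
  assumes d: "dsic1 Q H"
    and hm[measurable]: "h \<in> borel_measurable borel" and hpos: "\<And>x. 0 \<le> h x" and a: "0 \<le> a"
    and cond: "\<And>s. s \<in> {0<..<1} \<Longrightarrow> ennreal (s * h s) \<le> (\<integral>\<^sup>+ x. ennreal (h x) * indicator {s..<1} x \<partial>lborel) + ennreal a"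
  shows "(\<integral>\<^sup>+ x. ennreal (h x) * indicator {0<..<1} x \<partial>lborel) + ennreal a
     \<le> (\<integral>\<^sup>+ x. ennreal (h x) * ennreal (1 - H x) * indicator {0<..<1} x \<partial>lborel) + ennreal a * ennreal (1 - H 1) + ennreal a * ennreal (Q 1)"
proof -
  define Qc where "Qc x = Q (clmp x)" for x
  define Hc where "Hc x = H (clmp x)" for x
  have dc: "dsic1 Qc Hc" unfolding Qc_def Hc_def by (rule dsic1_clmp[OF d])
  have Qcm[measurable]: "Qc \<in> borel_measurable borel" and Hcm[measurable]: "Hc \<in> borel_measurable borel"
    using dsic1_meas[OF d] unfolding Qc_def Hc_def by auto
  define U where "U x = x * Qc x - Hc x" for x
  have Um[measurable]: "U \<in> borel_measurable borel" unfolding U_def by measurable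
  have I01: "x \<in> {0..1}" if "x \<in> {0<..<1}" for x :: real using that by auto
  have QcQ: "Qc x = Q x" "Hc x = H x" if "x \<in> {0..1}" for x using that by (auto simp: Qc_def Hc_def)
  have Qb: "0 \<le> Qc x" "Qc x \<le> 1" "U x \<ge> 0" if "x \<in> {0..1}" for x
    using dsic1_D(2-4)[OF dc that that] unfolding U_def by auto
  have xQ: "0 \<le> x * Qc x" "x * Qc x \<le> 1" if "x \<in> {0..1}" for x
    using Qb[OF that] that by (auto intro: mult_le_one)
  have A: "(\<integral>\<^sup>+ x. ennreal (h x) * ennreal (1 - H x) * indicator {0<..<1} x \<partial>lborel)
      = (\<integral>\<^sup>+ x. ennreal (h x) * ennreal (1 - x * Qc x) * indicator {0<..<1} x \<partial>lborel)
        + (\<integral>\<^sup>+ x. ennreal (h x) * ennreal (U x) * indicator {0<..<1} x \<partial>lborel)"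
  proof -
    have "(\<integral>\<^sup>+ x. ennreal (h x) * ennreal (1 - H x) * indicator {0<..<1} x \<partial>lborel)
      = (\<integral>\<^sup>+ x. ennreal (h x) * ennreal (1 - x * Qc x) * indicator {0<..<1} x
             + ennreal (h x) * ennreal (U x) * indicator {0<..<1} x \<partial>lborel)"
    proof (rule nn_integral_cong)
      fix x :: real
      show "ennreal (h x) * ennreal (1 - H x) * indicator {0<..<1} x
          = ennreal (h x) * ennreal (1 - x * Qc x) * indicator {0<..<1} x + ennreal (h x) * ennreal (U x) * indicator {0<..<1} x"
      proof (cases "x \<in> {0<..<1}")
        case True
        have e: "1 - H x = (1 - x * Qc x) + U x" using QcQ[OF I01[OF True]] unfolding U_def by simp
        show ?thesis using True xQ[OF I01[OF True]] Qb(3)[OF I01[OF True]]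
          by (simp add: e ennreal_plus distrib_left)
      qed simp
    qed
    also have "\<dots> = (\<integral>\<^sup>+ x. ennreal (h x) * ennreal (1 - x * Qc x) * indicator {0<..<1} x \<partial>lborel)
        + (\<integral>\<^sup>+ x. ennreal (h x) * ennreal (U x) * indicator {0<..<1} x \<partial>lborel)"
      by (rule nn_integral_add) auto
    finally show ?thesis .
  qed
  have B: "(\<integral>\<^sup>+ x. ennreal (h x) * indicator {0<..<1} x \<partial>lborel)
      = (\<integral>\<^sup>+ x. ennreal (h x) * ennreal (1 - x * Qc x) * indicator {0<..<1} x \<partial>lborel)
        + (\<integral>\<^sup>+ x. ennreal (h x) * ennreal (x * Qc x) * indicator {0<..<1} x \<partial>lborel)"
  proof -
    have "(\<integral>\<^sup>+ x. ennreal (h x) * indicator {0<..<1} x \<partial>lborel)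
      = (\<integral>\<^sup>+ x. ennreal (h x) * ennreal (1 - x * Qc x) * indicator {0<..<1} x
             + ennreal (h x) * ennreal (x * Qc x) * indicator {0<..<1} x \<partial>lborel)"
    proof (rule nn_integral_cong)
      fix x :: real
      show "ennreal (h x) * indicator {0<..<1} x
          = ennreal (h x) * ennreal (1 - x * Qc x) * indicator {0<..<1} x + ennreal (h x) * ennreal (x * Qc x) * indicator {0<..<1} x"
      proof (cases "x \<in> {0<..<1}")
        case True
        have "ennreal (1 - x * Qc x) + ennreal (x * Qc x) = 1"
          using xQ[OF I01[OF True]] by (subst ennreal_plus[symmetric]) auto
        then have "ennreal (h x) = ennreal (h x) * ennreal (1 - x * Qc x) + ennreal (h x) * ennreal (x * Qc x)"
          by (metis distrib_left mult.right_neutral)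
        then show ?thesis using True by simp
      qed simp
    qed
    also have "\<dots> = (\<integral>\<^sup>+ x. ennreal (h x) * ennreal (1 - x * Qc x) * indicator {0<..<1} x \<partial>lborel)
        + (\<integral>\<^sup>+ x. ennreal (h x) * ennreal (x * Qc x) * indicator {0<..<1} x \<partial>lborel)"
      by (rule nn_integral_add) auto
    finally show ?thesis .
  qed
  have C: "ennreal a * ennreal (1 - H 1) + ennreal a * ennreal (Q 1) = ennreal a * ennreal (U 1) + ennreal a"
  proof -
    have one: "(1::real) \<in> {0..1}" by simp
    have e: "1 - H 1 = (1 - Q 1) + U 1" using QcQ[OF one] unfolding U_def by simp
    have "ennreal (1 - H 1) = ennreal (1 - Q 1) + ennreal (U 1)"
      unfolding e using Qb[OF one] QcQ[OF one] by (intro ennreal_plus) auto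
    moreover have "ennreal (1 - Q 1) + ennreal (Q 1) = 1"
      using Qb[OF one] QcQ[OF one] by (subst ennreal_plus[symmetric]) auto
    ultimately show ?thesis by (metis (no_types, lifting) add.commute add.left_commute distrib_left mult.right_neutral)
  qed
  have D: "(\<integral>\<^sup>+ x. ennreal (h x) * ennreal (x * Qc x) * indicator {0<..<1} x \<partial>lborel)
      \<le> (\<integral>\<^sup>+ x. ennreal (h x) * ennreal (U x) * indicator {0<..<1} x \<partial>lborel) + ennreal a * ennreal (U 1)"
  proof -
    have "(\<integral>\<^sup>+ x. ennreal (h x) * ennreal (x * Qc x) * indicator {0<..<1} x \<partial>lborel)
        \<le> (\<integral>\<^sup>+ s. ennreal (Qc s) * indicator {0<..<1} s *
              ((\<integral>\<^sup>+ x. ennreal (h x) * indicator {s..<1} x \<partial>lborel) + ennreal a) \<partial>lborel)"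
    proof (rule nn_integral_mono)
      fix s :: real
      show "ennreal (h s) * ennreal (s * Qc s) * indicator {0<..<1} s
         \<le> ennreal (Qc s) * indicator {0<..<1} s * ((\<integral>\<^sup>+ x. ennreal (h x) * indicator {s..<1} x \<partial>lborel) + ennreal a)"
      proof (cases "s \<in> {0<..<1}")
        case True
        have "ennreal (h s) * ennreal (s * Qc s) = ennreal (Qc s) * ennreal (s * h s)"
          using Qb[OF I01[OF True]] hpos[of s] True
          by (simp add: ennreal_mult'[symmetric] mult_ac)
        also have "\<dots> \<le> ennreal (Qc s) * ((\<integral>\<^sup>+ x. ennreal (h x) * indicator {s..<1} x \<partial>lborel) + ennreal a)"
          by (rule mult_left_mono[OF cond[OF True]]) simp
        finally show ?thesis using True by simp
      qed simp
    qed
    also have "\<dots> = (\<integral>\<^sup>+ s. (\<integral>\<^sup>+ x. ennreal (Qc s) * indicator {0<..<1} s * (ennreal (h x) * indicator {s..<1} x) \<partial>lborel)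
                    + ennreal a * (ennreal (Qc s) * indicator {0<..<1} s) \<partial>lborel)"
    proof (rule nn_integral_cong)
      fix s :: real
      have eq: "(\<integral>\<^sup>+ x. ennreal (Qc s) * indicator {0<..<1} s * (ennreal (h x) * indicator {s..<1} x) \<partial>lborel)
          = ennreal (Qc s) * indicator {0<..<1} s * (\<integral>\<^sup>+ x. ennreal (h x) * indicator {s..<1} x \<partial>lborel)"
        by (rule nn_integral_cmult) measurable
      show "ennreal (Qc s) * indicator {0<..<1} s * ((\<integral>\<^sup>+ x. ennreal (h x) * indicator {s..<1} x \<partial>lborel) + ennreal a)
         = (\<integral>\<^sup>+ x. ennreal (Qc s) * indicator {0<..<1} s * (ennreal (h x) * indicator {s..<1} x) \<partial>lborel)
            + ennreal a * (ennreal (Qc s) * indicator {0<..<1} s)"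
        by (simp only: distrib_left eq) (simp add: mult_ac)
    qed
    also have "\<dots> = (\<integral>\<^sup>+ s. (\<integral>\<^sup>+ x. ennreal (Qc s) * indicator {0<..<1} s * (ennreal (h x) * indicator {s..<1} x) \<partial>lborel) \<partial>lborel)
                    + (\<integral>\<^sup>+ s. ennreal a * (ennreal (Qc s) * indicator {0<..<1} s) \<partial>lborel)"
      by (rule nn_integral_add) auto
    also have "(\<integral>\<^sup>+ s. (\<integral>\<^sup>+ x. ennreal (Qc s) * indicator {0<..<1} s * (ennreal (h x) * indicator {s..<1} x) \<partial>lborel) \<partial>lborel)
        = (\<integral>\<^sup>+ x. (\<integral>\<^sup>+ s. ennreal (Qc s) * indicator {0<..<1} s * (ennreal (h x) * indicator {s..<1} x) \<partial>lborel) \<partial>lborel)"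
      by (rule lborel_pair.Fubini'[symmetric]) measurable
    also have "\<dots> \<le> (\<integral>\<^sup>+ x. ennreal (h x) * ennreal (U x) * indicator {0<..<1} x \<partial>lborel)"
    proof (rule nn_integral_mono)
      fix x :: real
      show "(\<integral>\<^sup>+ s. ennreal (Qc s) * indicator {0<..<1} s * (ennreal (h x) * indicator {s..<1} x) \<partial>lborel)
          \<le> ennreal (h x) * ennreal (U x) * indicator {0<..<1} x"
      proof (cases "x \<in> {0<..<1}")
        case True
        have "(\<integral>\<^sup>+ s. ennreal (Qc s) * indicator {0<..<1} s * (ennreal (h x) * indicator {s..<1} x) \<partial>lborel)
            \<le> (\<integral>\<^sup>+ s. ennreal (h x) * (ennreal (Qc s) * indicator {0..x} s) \<partial>lborel)"
          by (rule nn_integral_mono) (auto simp: indicator_def mult.commute)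
        also have "\<dots> = ennreal (h x) * (\<integral>\<^sup>+ s. ennreal (Qc s) * indicator {0..x} s \<partial>lborel)"
          by (rule nn_integral_cmult) measurable
        also have "\<dots> \<le> ennreal (h x) * ennreal (U x)"
          using envelope[OF dc Qcm I01[OF True]] unfolding U_def by (rule mult_left_mono) simp
        finally show ?thesis using True by simp
      next
        case False
        have "(\<integral>\<^sup>+ s. ennreal (Qc s) * indicator {0<..<1} s * (ennreal (h x) * indicator {s..<1} x) \<partial>lborel) = 0"
          using False by (intro nn_integral_zero') (auto simp: indicator_def)
        then show ?thesis by simp
      qed
    qed
    also have "(\<integral>\<^sup>+ s. ennreal a * (ennreal (Qc s) * indicator {0<..<1} s) \<partial>lborel)
        \<le> ennreal a * ennreal (U 1)"
    proof -
      have "(\<integral>\<^sup>+ s. ennreal a * (ennreal (Qc s) * indicator {0<..<1} s) \<partial>lborel)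
          = ennreal a * (\<integral>\<^sup>+ s. ennreal (Qc s) * indicator {0<..<1} s \<partial>lborel)"
        by (rule nn_integral_cmult) measurable
      also have "\<dots> \<le> ennreal a * (\<integral>\<^sup>+ s. ennreal (Qc s) * indicator {0..1} s \<partial>lborel)"
        by (intro mult_left_mono nn_integral_mono) (auto simp: indicator_def)
      also have "\<dots> \<le> ennreal a * ennreal (U 1)"
        using envelope[OF dc Qcm, of 1] unfolding U_def by (intro mult_left_mono) auto
      finally show ?thesis .
    qed
    finally show ?thesis by (simp add: add_mono)
  qed
  show ?thesis
    unfolding A B add.assoc C
    by (rule aux_add[OF D])
qed

definition rd :: "nat \<Rightarrow> real \<Rightarrow> real" where "rd n x = real_of_int \<lceil>2^n * x\<rceil> / 2^n"

lemma rd_props: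
  assumes x: "x \<in> {0..1}"
  shows "x \<le> rd n x" "rd n x \<le> 1" "rd n x \<le> x + 1 / 2^n" "rd n x \<in> {0..1}"
proof -
  have p: "(0::real) < 2^n" by simp
  have "2^n * x \<le> real_of_int \<lceil>2^n * x\<rceil>" by (rule le_of_int_ceiling)
  then show a: "x \<le> rd n x" unfolding rd_def using p by (simp add: field_simps)
  have "\<lceil>2^n * x\<rceil> \<le> 2^n"
    using x by (simp add: ceiling_le_iff)
  then have "real_of_int \<lceil>2^n * x\<rceil> \<le> 2^n" by (metis of_int_le_iff of_int_numeral of_int_power)
  then show b: "rd n x \<le> 1" unfolding rd_def using p by (simp add: field_simps)
  have "real_of_int \<lceil>2^n * x\<rceil> \<le> 2^n * x + 1" by (rule of_int_ceiling_le_add_one)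
  then show "rd n x \<le> x + 1 / 2^n" unfolding rd_def using p by (simp add: field_simps)
  show "rd n x \<in> {0..1}" using a b x by auto
qed

lemma rd_dec: "rd (Suc n) x \<le> rd n x"
proof -
  have p: "(0::real) < 2^n" by simp
  have "2^(Suc n) * x \<le> real_of_int (2 * \<lceil>2^n * x\<rceil>)"
    using le_of_int_ceiling[of "2^n * x"] by simp
  then have "\<lceil>2^(Suc n) * x\<rceil> \<le> 2 * \<lceil>2^n * x\<rceil>" by (simp add: ceiling_le_iff)
  then have "real_of_int \<lceil>2^(Suc n) * x\<rceil> \<le> 2 * real_of_int \<lceil>2^n * x\<rceil>"
    by (metis of_int_le_iff of_int_mult of_int_numeral)
  then show ?thesis unfolding rd_def using p by (simp add: field_simps)
qed

lemma rd_one[simp]: "rd n 1 = 1"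
  unfolding rd_def by simp

lemma rd_lim:
  assumes x: "x \<in> {0..1}" shows "(\<lambda>n. rd n x) \<longlonglongrightarrow> x"
proof (rule tendsto_sandwich[of "\<lambda>n. x" _ _ "\<lambda>n. x + 1 / 2^n"])
  show "\<forall>\<^sub>F n in sequentially. x \<le> rd n x" using rd_props(1)[OF x] by simp
  show "\<forall>\<^sub>F n in sequentially. rd n x \<le> x + 1 / 2^n" using rd_props(3)[OF x] by simp
  show "(\<lambda>n. x) \<longlonglongrightarrow> x" by simp
  have "(\<lambda>n. (1/2::real)^n) \<longlonglongrightarrow> 0" by (rule LIMSEQ_realpow_zero) auto
  then have "(\<lambda>n. 1 / (2::real)^n) \<longlonglongrightarrow> 0" by (simp add: power_one_over)
  then show "(\<lambda>n. x + 1 / 2^n) \<longlonglongrightarrow> x" using tendsto_add[of "\<lambda>n. x" x] by fastforce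
qed

lemma decseq_rd_mono:
  assumes "mono_on {0..1} g" "x \<in> {0..1}"
  shows "decseq (\<lambda>n. g (rd n x))"
  unfolding decseq_Suc_iff
  using assms rd_props(4)[OF assms(2)] rd_dec by (metis mono_onD)

lemma regularize:
  fixes Q H :: "real \<Rightarrow> real \<Rightarrow> real"
  assumes d: "\<And>y. y \<in> {0..1} \<Longrightarrow> dsic1 (\<lambda>x. Q x y) (\<lambda>x. H x y)"
    and m: "\<And>c. c \<in> {0..1} \<Longrightarrow> (\<lambda>y. H c (clmp y)) \<in> borel_measurable borel"
  obtains Hr Qr where "(\<lambda>p. Hr (fst p) (snd p)) \<in> borel_measurable borel"
    "\<And>y. y \<in> {0..1} \<Longrightarrow> dsic1 (\<lambda>x. Qr x y) (\<lambda>x. Hr x y)"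
    "\<And>x y. x \<in> {0..1} \<Longrightarrow> y \<in> {0..1} \<Longrightarrow> H x y \<le> Hr x y"
    "\<And>y. y \<in> {0..1} \<Longrightarrow> Hr 1 y = H 1 y \<and> Qr 1 y = Q 1 y"
proof -
  define Hr where "Hr x y = lim (\<lambda>n. H (clmp (rd n (clmp x))) (clmp y))" for x y
  define Qr where "Qr x y = lim (\<lambda>n. Q (clmp (rd n (clmp x))) (clmp y))" for x y
  have Hmono: "mono_on {0..1} (\<lambda>x. H x y)" if "y \<in> {0..1}" for y
    using dsic1_Hmono[OF d[OF that]] by (auto intro!: mono_onI)
  have Qmono: "mono_on {0..1} (\<lambda>x. Q x y)" if "y \<in> {0..1}" for y
    using dsic1_Qmono[OF d[OF that]] by (auto intro!: mono_onI)
  have cH: "(\<lambda>n. H (clmp (rd n (clmp x))) (clmp y)) \<longlonglongrightarrow> Hr x y" for x y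
  proof -
    have x: "clmp x \<in> {0..1}" and y: "clmp y \<in> {0..1}" by (rule clmp_range)+
    have e: "(\<lambda>n. H (clmp (rd n (clmp x))) (clmp y)) = (\<lambda>n. H (rd n (clmp x)) (clmp y))"
      using rd_props(4)[OF x] by simp
    have "decseq (\<lambda>n. H (rd n (clmp x)) (clmp y))"
      by (rule decseq_rd_mono[OF Hmono[OF y] x])
    moreover have "\<forall>i. H (clmp x) (clmp y) \<le> H (rd i (clmp x)) (clmp y)"
      using mono_onD[OF Hmono[OF y] x rd_props(4)[OF x] rd_props(1)[OF x]] by auto
    ultimately obtain L where "(\<lambda>n. H (rd n (clmp x)) (clmp y)) \<longlonglongrightarrow> L"
      by (rule decseq_convergent)
    then show ?thesis unfolding Hr_def e by (simp add: limI)
  qed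
  have cQ: "(\<lambda>n. Q (clmp (rd n (clmp x))) (clmp y)) \<longlonglongrightarrow> Qr x y" for x y
  proof -
    have x: "clmp x \<in> {0..1}" and y: "clmp y \<in> {0..1}" by (rule clmp_range)+
    have e: "(\<lambda>n. Q (clmp (rd n (clmp x))) (clmp y)) = (\<lambda>n. Q (rd n (clmp x)) (clmp y))"
      using rd_props(4)[OF x] by simp
    have "decseq (\<lambda>n. Q (rd n (clmp x)) (clmp y))"
      by (rule decseq_rd_mono[OF Qmono[OF y] x])
    moreover have "\<forall>i. Q (clmp x) (clmp y) \<le> Q (rd i (clmp x)) (clmp y)"
      using mono_onD[OF Qmono[OF y] x rd_props(4)[OF x] rd_props(1)[OF x]] by auto
    ultimately obtain L where "(\<lambda>n. Q (rd n (clmp x)) (clmp y)) \<longlonglongrightarrow> L"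
      by (rule decseq_convergent)
    then show ?thesis unfolding Qr_def e by (simp add: limI)
  qed
  have cH': "(\<lambda>n. H (rd n x) y) \<longlonglongrightarrow> Hr x y" if "x \<in> {0..1}" "y \<in> {0..1}" for x y
    using cH[of x y] that rd_props(4)[OF that(1)] by simp
  have cQ': "(\<lambda>n. Q (rd n x) y) \<longlonglongrightarrow> Qr x y" if "x \<in> {0..1}" "y \<in> {0..1}" for x y
    using cQ[of x y] that rd_props(4)[OF that(1)] by simp
  show ?thesis
  proof
    show "(\<lambda>p. Hr (fst p) (snd p)) \<in> borel_measurable borel"
    proof (rule borel_measurable_LIMSEQ_real)
      fix p :: "real \<times> real"
      show "(\<lambda>n. H (clmp (rd n (clmp (fst p)))) (clmp (snd p))) \<longlonglongrightarrow> Hr (fst p) (snd p)"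
        by (rule cH)
    next
      fix n
      have f: "(\<lambda>p::real\<times>real. H (clmp (real_of_int i / 2^n)) (clmp (snd p))) \<in> borel_measurable borel" for i :: int
      proof -
        have "(\<lambda>y. H (clmp (real_of_int i / 2^n)) (clmp y)) \<in> borel_measurable borel"
          by (rule m[OF clmp_range])
        then have "(\<lambda>p::real\<times>real. H (clmp (real_of_int i / 2^n)) (clmp (snd p))) \<in> borel_measurable (borel \<Otimes>\<^sub>M borel)"
          by (rule measurable_compose[OF measurable_snd])
        then show ?thesis by (simp add: borel_prod)
      qed
      have "(\<lambda>p::real\<times>real. \<lceil>2^n * clmp (fst p)\<rceil>) \<in> measurable (borel \<Otimes>\<^sub>M borel) (count_space UNIV)"
        by measurable
      then have g: "(\<lambda>p::real\<times>real. \<lceil>2^n * clmp (fst p)\<rceil>) \<in> measurable borel (count_space UNIV)"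
        by (simp add: borel_prod)
      have "(\<lambda>p::real\<times>real. H (clmp (real_of_int \<lceil>2^n * clmp (fst p)\<rceil> / 2^n)) (clmp (snd p))) \<in> borel_measurable borel"
        by (rule measurable_compose_countable[OF f g])
      then show "(\<lambda>p. H (clmp (rd n (clmp (fst p)))) (clmp (snd p))) \<in> borel_measurable borel"
        unfolding rd_def .
    qed
  next
    fix y :: real assume y: "y \<in> {0..1}"
    show "dsic1 (\<lambda>x. Qr x y) (\<lambda>x. Hr x y)"
      unfolding dsic1_def
    proof (intro conjI ballI)
      fix x w :: real assume x: "x \<in> {0..1}" and w: "w \<in> {0..1}"
      show "x * Qr w y - Hr w y \<le> x * Qr x y - Hr x y"
      proof (rule LIMSEQ_le)
        show "(\<lambda>n. rd n x * Q (rd n w) y - H (rd n w) y) \<longlonglongrightarrow> x * Qr w y - Hr w y"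
          by (intro tendsto_intros rd_lim x cQ' cH' w y)
        show "(\<lambda>n. rd n x * Q (rd n x) y - H (rd n x) y) \<longlonglongrightarrow> x * Qr x y - Hr x y"
          by (intro tendsto_intros rd_lim x cQ' cH' w y)
        show "\<exists>N. \<forall>n\<ge>N. rd n x * Q (rd n w) y - H (rd n w) y \<le> rd n x * Q (rd n x) y - H (rd n x) y"
          using dsic1_D(1)[OF d[OF y] rd_props(4)[OF x] rd_props(4)[OF w]] by auto
      qed
    next
      fix x :: real assume x: "x \<in> {0..1}"
      show "0 \<le> x * Qr x y - Hr x y"
        apply (rule LIMSEQ_le_const[of "\<lambda>n. rd n x * Q (rd n x) y - H (rd n x) y"])
         apply (intro tendsto_intros rd_lim x cQ' cH' y)
        using dsic1_D(2)[OF d[OF y] rd_props(4)[OF x] rd_props(4)[OF x]] by auto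
      show "0 \<le> Qr x y"
        apply (rule LIMSEQ_le_const[OF cQ'[OF x y]])
        using dsic1_D(3)[OF d[OF y] rd_props(4)[OF x] rd_props(4)[OF x]] by auto
      show "Qr x y \<le> 1"
        apply (rule LIMSEQ_le_const2[OF cQ'[OF x y]])
        using dsic1_D(4)[OF d[OF y] rd_props(4)[OF x] rd_props(4)[OF x]] by auto
    qed
  next
    fix x y :: real assume x: "x \<in> {0..1}" and y: "y \<in> {0..1}"
    show "H x y \<le> Hr x y"
      apply (rule LIMSEQ_le_const[OF cH'[OF x y]])
      using mono_onD[OF Hmono[OF y] x rd_props(4)[OF x] rd_props(1)[OF x]] by auto
  next
    fix y :: real assume y: "y \<in> {0..1}"
    have one: "(1::real) \<in> {0..1}" by simp
    have "(\<lambda>n. H (rd n 1) y) \<longlonglongrightarrow> H 1 y" by simp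
    moreover have "(\<lambda>n. Q (rd n 1) y) \<longlonglongrightarrow> Q 1 y" by simp
    ultimately show "Hr 1 y = H 1 y \<and> Qr 1 y = Q 1 y"
      using cH'[OF one y] cQ'[OF one y] LIMSEQ_unique by blast
  qed
qed

lemma nn_integral_Ioo_Icc:
  fixes a b :: real
  shows "(\<integral>\<^sup>+ x. h x * indicator {a<..<b} x \<partial>lborel) = (\<integral>\<^sup>+ x. h x * indicator {a..b} x \<partial>lborel)"
proof (rule nn_integral_cong_AE)
  have "AE x in lborel. x \<noteq> a" "AE x in lborel. x \<noteq> b" by (rule AE_lborel_singleton)+
  then show "AE x in lborel. h x * indicator {a<..<b} x = h x * indicator {a..b} x"
    by eventually_elim (auto simp: indicator_def)
qed

lemma nn_integral_Ico_Icc: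
  fixes a b :: real
  shows "(\<integral>\<^sup>+ x. h x * indicator {a..<b} x \<partial>lborel) = (\<integral>\<^sup>+ x. h x * indicator {a..b} x \<partial>lborel)"
proof (rule nn_integral_cong_AE)
  have "AE x in lborel. x \<noteq> b" by (rule AE_lborel_singleton)+
  then show "AE x in lborel. h x * indicator {a..<b} x = h x * indicator {a..b} x"
    by eventually_elim (auto simp: indicator_def)
qed

lemma inv_sq_integral:
  fixes a b :: real
  assumes "0 < a" "a \<le> b"
  shows "(\<integral>\<^sup>+ x. ennreal (1 / x^2) * indicator {a..b} x \<partial>lborel) = ennreal (1 / a - 1 / b)"
proof -
  have "(\<integral>\<^sup>+ x. ennreal (1 / x^2) * indicator {a..b} x \<partial>lborel) = (\<lambda>x. - 1 / x) b - (\<lambda>x. - 1 / x) a"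
  proof (rule nn_integral_FTC_Icc)
    show "(\<lambda>x::real. 1 / x^2) \<in> borel_measurable borel" by measurable
    fix x assume x: "x \<in> {a..b}"
    then have "x \<noteq> 0" using assms by auto
    then show "((\<lambda>x. - 1 / x) has_real_derivative 1 / x^2) (at x)"
      by (auto intro!: derivative_eq_intros simp: power2_eq_square field_simps)
    show "0 \<le> 1 / x^2" by simp
  qed (use assms in auto)
  then show ?thesis by simp
qed

locale setting =
  fixes F :: "real measure" and f :: "real \<Rightarrow> real"
  assumes F_prob: "prob_space F"
    and F_sets: "sets F = sets borel"
    and F_supp1: "emeasure F (- {0..1}) = 0"
    and f_meas: "set_borel_measurable lborel {0<..<1} f"
    and f_nonneg: "\<forall>x\<in>{0<..<1}. 0 \<le> f x"
    and F_dens: "\<forall>A\<in>sets borel.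
         emeasure F (A \<inter> {0<..<1}) = (\<integral>\<^sup>+ x\<in>A \<inter> {0<..<1}. ennreal (f x) \<partial>lborel)"
    and reg1: "mono_on {0<..<1} (\<lambda>x. x^2 * f x)"
    and reg2: "measure F {1} \<ge> (LINT x:{0<..<1}|lborel. x^2 * f x)"
begin

interpretation Fp: prob_space F by (rule F_prob)

abbreviation "F0 \<equiv> measure F {0}"
abbreviation "F1 \<equiv> measure F {1}"
definition fz :: "real \<Rightarrow> real" where "fz x = f x * indicator {0<..<1} x"
definition Ir :: "real \<Rightarrow> real" where "Ir v = (LINT s:{0<..<v}|lborel. s^2 * f s)"

lemma fz_meas[measurable]: "fz \<in> borel_measurable borel"
proof -
  have "(\<lambda>x. indicator {0<..<1} x *\<^sub>R f x) \<in> borel_measurable borel"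
    using f_meas unfolding set_borel_measurable_def by simp
  moreover have "(\<lambda>x. indicator {0<..<1} x *\<^sub>R f x) = fz" by (auto simp: fz_def fun_eq_iff)
  ultimately show ?thesis by simp
qed

lemma fz_nonneg: "0 \<le> fz x"
  using f_nonneg by (auto simp: fz_def indicator_def)

lemma F_space: "space F = UNIV"
  using sets_eq_imp_space_eq[OF F_sets] by simp

lemma F_decomp:
  assumes A: "A \<in> sets borel"
  shows "emeasure F A = ennreal F0 * indicator A 0
     + (\<integral>\<^sup>+ x. ennreal (f x) * indicator (A \<inter> {0<..<1}) x \<partial>lborel) + ennreal F1 * indicator A 1"
proof -
  have sets: "A \<inter> {0} \<in> sets F" "A \<inter> {0<..<1} \<in> sets F" "A \<inter> {1} \<in> sets F" "A - {0..1} \<in> sets F"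
    using A F_sets by auto
  have "A = (((A \<inter> {0}) \<union> (A \<inter> {0<..<1})) \<union> (A \<inter> {1})) \<union> (A - {0..1})" by auto
  then have "emeasure F A = emeasure F ((((A \<inter> {0}) \<union> (A \<inter> {0<..<1})) \<union> (A \<inter> {1})) \<union> (A - {0..1}))"
    by simp
  also have "\<dots> = emeasure F (A \<inter> {0}) + emeasure F (A \<inter> {0<..<1}) + emeasure F (A \<inter> {1}) + emeasure F (A - {0..1})"
    using sets by (subst plus_emeasure[symmetric], auto)+
  also have "emeasure F (A - {0..1}) = 0"
  proof -
    have "emeasure F (A - {0..1}) \<le> emeasure F (- {0..1})"
      by (rule emeasure_mono) (use F_sets in auto)
    then show ?thesis using F_supp1 by simp
  qed
  also have "emeasure F (A \<inter> {0}) = ennreal F0 * indicator A 0"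
    by (cases "0 \<in> A") (auto simp: Fp.emeasure_eq_measure Int_absorb1)
  also have "emeasure F (A \<inter> {1}) = ennreal F1 * indicator A 1"
    by (cases "1 \<in> A") (auto simp: Fp.emeasure_eq_measure Int_absorb1)
  also have "emeasure F (A \<inter> {0<..<1}) = (\<integral>\<^sup>+ x. ennreal (f x) * indicator (A \<inter> {0<..<1}) x \<partial>lborel)"
    using F_dens A by simp
  finally show ?thesis by simp
qed

lemma fz_int: "(\<integral>\<^sup>+ x. ennreal (fz x) \<partial>lborel) = emeasure F {0<..<1}"
proof -
  have "emeasure F {0<..<1} = (\<integral>\<^sup>+ x. ennreal (f x) * indicator {0<..<1} x \<partial>lborel)"
    using F_dens[rule_format, of UNIV] by simp
  also have "\<dots> = (\<integral>\<^sup>+ x. ennreal (fz x) \<partial>lborel)"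
    by (rule nn_integral_cong) (auto simp: fz_def indicator_def)
  finally show ?thesis ..
qed

lemma fz_int_fin: "(\<integral>\<^sup>+ x. ennreal (fz x) \<partial>lborel) < \<infinity>"
  unfolding fz_int by (simp add: Fp.emeasure_eq_measure)

definition N0 :: "real measure" where "N0 = scale_measure (ennreal F0) (return borel 0)"
definition Nd :: "real measure" where "Nd = density lborel (\<lambda>x. ennreal (fz x))"
definition N1 :: "real measure" where "N1 = scale_measure (ennreal F1) (return borel 1)"

lemma F_madd: "F = madd (madd N0 Nd) N1"
proof (rule measure_eqI)
  show "sets F = sets (madd (madd N0 Nd) N1)" using F_sets by (simp add: N0_def)
next
  fix A assume "A \<in> sets F"
  then have A: "A \<in> sets borel" using F_sets by simp
  have "emeasure (madd (madd N0 Nd) N1) A = emeasure N0 A + emeasure Nd A + emeasure N1 A"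
    using A by (simp add: emeasure_madd N0_def Nd_def N1_def)
  also have "emeasure Nd A = (\<integral>\<^sup>+ x. ennreal (fz x) * indicator A x \<partial>lborel)"
    unfolding Nd_def using A by (simp add: emeasure_density)
  also have "\<dots> = (\<integral>\<^sup>+ x. ennreal (f x) * indicator (A \<inter> {0<..<1}) x \<partial>lborel)"
    by (rule nn_integral_cong) (auto simp: fz_def indicator_def)
  also have "emeasure N0 A = ennreal F0 * indicator A 0" using A by (simp add: N0_def)
  also have "emeasure N1 A = ennreal F1 * indicator A 1" using A by (simp add: N1_def)
  also have "ennreal F0 * indicator A 0 + (\<integral>\<^sup>+ x. ennreal (f x) * indicator (A \<inter> {0<..<1}) x \<partial>lborel)
      + ennreal F1 * indicator A 1 = emeasure F A"
    using F_decomp[OF A] by simp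
  finally show "emeasure F A = emeasure (madd (madd N0 Nd) N1) A" ..
qed

lemma nn_integral_F:
  assumes h[measurable]: "h \<in> borel_measurable borel"
  shows "(\<integral>\<^sup>+ x. h x \<partial>F) = ennreal F0 * h 0 + (\<integral>\<^sup>+ x. ennreal (fz x) * h x \<partial>lborel) + ennreal F1 * h 1"
proof -
  have "(\<integral>\<^sup>+ x. h x \<partial>F) = (\<integral>\<^sup>+ x. h x \<partial>madd (madd N0 Nd) N1)" using F_madd by simp
  also have "\<dots> = (\<integral>\<^sup>+ x. h x \<partial>N0) + (\<integral>\<^sup>+ x. h x \<partial>Nd) + (\<integral>\<^sup>+ x. h x \<partial>N1)"
  proof -
    have s: "sets (madd N0 Nd) = sets borel" "sets N1 = sets borel" "sets Nd = sets borel" "sets N0 = sets borel"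
      by (simp_all add: N0_def Nd_def N1_def)
    have m1: "h \<in> borel_measurable (madd N0 Nd)" "h \<in> borel_measurable N0"
      using h s by (simp_all cong: measurable_cong_sets)
    have "(\<integral>\<^sup>+ x. h x \<partial>madd (madd N0 Nd) N1) = (\<integral>\<^sup>+ x. h x \<partial>madd N0 Nd) + (\<integral>\<^sup>+ x. h x \<partial>N1)"
      by (rule nn_integral_madd[OF _ m1(1)]) (simp add: s)
    also have "(\<integral>\<^sup>+ x. h x \<partial>madd N0 Nd) = (\<integral>\<^sup>+ x. h x \<partial>N0) + (\<integral>\<^sup>+ x. h x \<partial>Nd)"
      by (rule nn_integral_madd[OF _ m1(2)]) (simp add: s)
    finally show ?thesis .
  qed
  also have "\<dots> = ennreal F0 * h 0 + (\<integral>\<^sup>+ x. ennreal (fz x) * h x \<partial>lborel) + ennreal F1 * h 1"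
    by (simp add: N0_def Nd_def N1_def nn_integral_scale_measure nn_integral_return nn_integral_density)
  finally show ?thesis .
qed

end

lemma meas_ind_Ioo[measurable (raw)]:
  fixes f g :: "'a \<Rightarrow> real"
  assumes [measurable]: "f \<in> borel_measurable M" "g \<in> borel_measurable M"
  shows "(\<lambda>x. indicator {c<..<f x} (g x) :: ennreal) \<in> borel_measurable M"
proof -
  have "(\<lambda>x. indicator {c<..<f x} (g x) :: ennreal) = (\<lambda>x. if c < g x \<and> g x < f x then 1 else 0)"
    by (auto simp: indicator_def)
  also have "\<dots> \<in> borel_measurable M" by measurable
  finally show ?thesis .
qed

context setting begin

definition Jn :: "real \<Rightarrow> ennreal" where
  "Jn v = (\<integral>\<^sup>+ s. ennreal (s^2 * fz s) * indicator {0<..<v} s \<partial>lborel)"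

lemma Jn_meas[measurable]: "Jn \<in> borel_measurable borel"
proof -
  have "(\<lambda>(v, s). ennreal (s^2 * fz s) * indicator {0<..<v} s) \<in> borel_measurable (borel \<Otimes>\<^sub>M lborel)"
    by measurable
  then show ?thesis unfolding Jn_def by (rule lborel.borel_measurable_nn_integral)
qed

lemma Ir_nn:
  assumes v: "0 < v" "v \<le> 1"
  shows "ennreal (Ir v) = Jn v" "0 \<le> Ir v"
proof -
  define \<phi> where "\<phi> s = indicator {0<..<v} s * (s^2 * fz s)" for s :: real
  have \<phi>m[measurable]: "\<phi> \<in> borel_measurable borel" unfolding \<phi>_def by measurable
  have \<phi>0: "0 \<le> \<phi> s" for s unfolding \<phi>_def using fz_nonneg[of s] by simp
  have Ir_eq: "Ir v = (\<integral>s. \<phi> s \<partial>lborel)"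
    unfolding Ir_def set_lebesgue_integral_def \<phi>_def
    by (rule Bochner_Integration.integral_cong) (use v in \<open>auto simp: fz_def indicator_def\<close>)
  have "(\<integral>\<^sup>+ s. ennreal (norm (\<phi> s)) \<partial>lborel) \<le> (\<integral>\<^sup>+ s. ennreal (fz s) \<partial>lborel)"
  proof (rule nn_integral_mono)
    fix s
    show "ennreal (norm (\<phi> s)) \<le> ennreal (fz s)"
    proof (cases "s \<in> {0<..<v}")
      case True
      then have "s^2 \<le> 1" using v by (simp add: power_le_one)
      then have "s^2 * fz s \<le> 1 * fz s" using fz_nonneg[of s] by (intro mult_right_mono) auto
      then show ?thesis using True \<phi>0[of s] by (simp add: \<phi>_def)
    qed (simp add: \<phi>_def)
  qed
  also have "\<dots> < \<infinity>" by (rule fz_int_fin)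
  finally have int: "integrable lborel \<phi>" by (intro integrableI_bounded) auto
  have "(\<integral>\<^sup>+ s. ennreal (\<phi> s) \<partial>lborel) = ennreal (\<integral>s. \<phi> s \<partial>lborel)"
    by (rule nn_integral_eq_integral[OF int]) (simp add: \<phi>0)
  moreover have "(\<integral>\<^sup>+ s. ennreal (\<phi> s) \<partial>lborel) = Jn v"
    unfolding Jn_def \<phi>_def by (rule nn_integral_cong) (auto simp: indicator_def)
  ultimately show "ennreal (Ir v) = Jn v" using Ir_eq by simp
  show "0 \<le> Ir v" unfolding Ir_eq using \<phi>0 by (simp add: Bochner_Integration.integral_nonneg)
qed

lemma Ir_eq_Jn: "0 < v \<Longrightarrow> v \<le> 1 \<Longrightarrow> Ir v = enn2real (Jn v)"
  using Ir_nn by (metis enn2real_ennreal)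

lemma sq_mono: "0 < s \<Longrightarrow> s \<le> v \<Longrightarrow> v < 1 \<Longrightarrow> s^2 * f s \<le> v^2 * f v"
  using reg1 by (auto intro: mono_onD)

lemma Ir_le:
  assumes v: "0 < v" "v < 1"
  shows "Ir v \<le> v^3 * f v"
proof -
  have fv: "0 \<le> f v" using f_nonneg v by auto
  have "ennreal (Ir v) = Jn v" using Ir_nn v by simp
  also have "\<dots> \<le> (\<integral>\<^sup>+ s. ennreal (v^2 * f v) * indicator {0<..<v} s \<partial>lborel)"
    unfolding Jn_def
  proof (rule nn_integral_mono)
    fix s show "ennreal (s^2 * fz s) * indicator {0<..<v} s \<le> ennreal (v^2 * f v) * indicator {0<..<v} s"
      using sq_mono[of s v] v by (auto simp: indicator_def fz_def intro!: ennreal_leI)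
  qed
  also have "\<dots> = ennreal (v^2 * f v) * ennreal v" using v by (simp add: nn_integral_cmult_indicator)
  also have "\<dots> = ennreal (v^3 * f v)" using v fv by (simp add: ennreal_mult'[symmetric] power3_eq_cube power2_eq_square mult_ac)
  finally show ?thesis using v fv by (subst (asm) ennreal_le_iff) auto
qed

definition gz :: "real \<Rightarrow> real" where "gz v = gstar f v * indicator {0<..<1} v"

lemma gstar_eq: "gstar f v = v * f v - Ir v / v^2"
  unfolding gstar_def Ir_def ..

lemma g_nonneg: "0 < v \<Longrightarrow> v < 1 \<Longrightarrow> 0 \<le> gstar f v"
proof -
  assume v: "0 < v" "v < 1"
  have "Ir v / v^2 \<le> v^3 * f v / v^2" using Ir_le[OF v] v by (intro divide_right_mono) auto
  also have "\<dots> = v * f v" using v by (simp add: power2_eq_square power3_eq_cube)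
  finally show ?thesis unfolding gstar_eq by simp
qed

lemma gz_nonneg: "0 \<le> gz v"
  using g_nonneg[of v] by (auto simp: gz_def indicator_def)

lemma gz_meas[measurable]: "gz \<in> borel_measurable borel"
proof -
  have "(\<lambda>v. (v * fz v - enn2real (Jn v) / v^2) * indicator {0<..<1} v) \<in> borel_measurable borel"
    by measurable
  moreover have "(\<lambda>v. (v * fz v - enn2real (Jn v) / v^2) * indicator {0<..<1} v) = gz"
    by (auto simp: fun_eq_iff gz_def gstar_eq fz_def indicator_def Ir_eq_Jn)
  ultimately show ?thesis by simp
qed

end

context setting begin

lemma Gid:
  assumes v: "0 < v" "v \<le> 1"
  shows "(\<integral>\<^sup>+ s. ennreal (gz s) * indicator {0<..<v} s \<partial>lborel) = ennreal (Ir v / v)"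
proof -
  define IrS where "IrS s = enn2real (Jn s)" for s
  have IrSm[measurable]: "IrS \<in> borel_measurable borel" unfolding IrS_def by measurable
  have IrS_eq: "IrS s = Ir s" if "0 < s" "s \<le> 1" for s using Ir_eq_Jn[OF that] by (simp add: IrS_def)
  define J where "J = (\<integral>\<^sup>+ s. ennreal (IrS s / s^2) * indicator {0<..<v} s \<partial>lborel)"
  define S where "S = (\<integral>\<^sup>+ s. ennreal (s * fz s) * indicator {0<..<v} s \<partial>lborel)"
  have a: "S = (\<integral>\<^sup>+ s. ennreal (gz s) * indicator {0<..<v} s \<partial>lborel) + J"
  proof -
    have "S = (\<integral>\<^sup>+ s. ennreal (gz s) * indicator {0<..<v} s + ennreal (IrS s / s^2) * indicator {0<..<v} s \<partial>lborel)"
      unfolding S_def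
    proof (rule nn_integral_cong)
      fix s :: real
      show "ennreal (s * fz s) * indicator {0<..<v} s
          = ennreal (gz s) * indicator {0<..<v} s + ennreal (IrS s / s^2) * indicator {0<..<v} s"
      proof (cases "s \<in> {0<..<v}")
        case True
        then have s: "0 < s" "s < 1" "s \<le> 1" using v by auto
        have e: "s * fz s = gz s + IrS s / s^2"
          using s by (simp add: gz_def fz_def gstar_eq IrS_eq)
        have "0 \<le> IrS s / s^2" using Ir_nn(2)[OF s(1,3)] IrS_eq[OF s(1,3)] by simp
        then show ?thesis using True gz_nonneg[of s] by (simp add: e ennreal_plus)
      qed simp
    qed
    also have "\<dots> = (\<integral>\<^sup>+ s. ennreal (gz s) * indicator {0<..<v} s \<partial>lborel) + J"
      unfolding J_def by (rule nn_integral_add) auto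
    finally show ?thesis .
  qed
  have b: "J + ennreal (Ir v / v) = S"
  proof -
    have "J = (\<integral>\<^sup>+ s. (\<integral>\<^sup>+ u. ennreal (1 / s^2) * indicator {0<..<v} s * (ennreal (u^2 * fz u) * indicator {0<..<s} u) \<partial>lborel) \<partial>lborel)"
      unfolding J_def
    proof (rule nn_integral_cong)
      fix s :: real
      have "(\<integral>\<^sup>+ u. ennreal (1 / s^2) * indicator {0<..<v} s * (ennreal (u^2 * fz u) * indicator {0<..<s} u) \<partial>lborel)
          = ennreal (1 / s^2) * indicator {0<..<v} s * Jn s"
        unfolding Jn_def by (rule nn_integral_cmult) measurable
      also have "\<dots> = ennreal (IrS s / s^2) * indicator {0<..<v} s"
      proof (cases "s \<in> {0<..<v}")
        case True
        then have s: "0 < s" "s \<le> 1" using v by auto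
        have "Jn s = ennreal (IrS s)" using Ir_nn(1)[OF s] IrS_eq[OF s] by simp
        then show ?thesis using True Ir_nn(2)[OF s] IrS_eq[OF s]
          by (simp add: ennreal_mult[symmetric] mult.commute)
      qed simp
      finally show "ennreal (IrS s / s^2) * indicator {0<..<v} s
          = (\<integral>\<^sup>+ u. ennreal (1 / s^2) * indicator {0<..<v} s * (ennreal (u^2 * fz u) * indicator {0<..<s} u) \<partial>lborel)" ..
    qed
    also have "\<dots> = (\<integral>\<^sup>+ u. (\<integral>\<^sup>+ s. ennreal (1 / s^2) * indicator {0<..<v} s * (ennreal (u^2 * fz u) * indicator {0<..<s} u) \<partial>lborel) \<partial>lborel)"
      by (rule lborel_pair.Fubini') measurable
    also have "\<dots> = (\<integral>\<^sup>+ u. ennreal (u^2 * fz u) * indicator {0<..<v} u * ennreal (1 / u - 1 / v) \<partial>lborel)"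
    proof (rule nn_integral_cong)
      fix u :: real
      show "(\<integral>\<^sup>+ s. ennreal (1 / s^2) * indicator {0<..<v} s * (ennreal (u^2 * fz u) * indicator {0<..<s} u) \<partial>lborel)
          = ennreal (u^2 * fz u) * indicator {0<..<v} u * ennreal (1 / u - 1 / v)"
      proof (cases "u \<in> {0<..<v}")
        case True
        have "(\<integral>\<^sup>+ s. ennreal (1 / s^2) * indicator {0<..<v} s * (ennreal (u^2 * fz u) * indicator {0<..<s} u) \<partial>lborel)
            = (\<integral>\<^sup>+ s. ennreal (u^2 * fz u) * (ennreal (1 / s^2) * indicator {u<..<v} s) \<partial>lborel)"
          by (rule nn_integral_cong) (use True in \<open>auto simp: indicator_def mult_ac\<close>)
        also have "\<dots> = ennreal (u^2 * fz u) * (\<integral>\<^sup>+ s. ennreal (1 / s^2) * indicator {u<..<v} s \<partial>lborel)"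
          by (rule nn_integral_cmult) measurable
        also have "(\<integral>\<^sup>+ s. ennreal (1 / s^2) * indicator {u<..<v} s \<partial>lborel) = ennreal (1 / u - 1 / v)"
          unfolding nn_integral_Ioo_Icc using True by (intro inv_sq_integral) auto
        finally show ?thesis using True by simp
      next
        case False
        have "(\<integral>\<^sup>+ s. ennreal (1 / s^2) * indicator {0<..<v} s * (ennreal (u^2 * fz u) * indicator {0<..<s} u) \<partial>lborel)
            = (\<integral>\<^sup>+ s. 0 \<partial>(lborel::real measure))"
          by (rule nn_integral_cong) (use False in \<open>auto simp: indicator_def\<close>)
        then show ?thesis using False by simp
      qed
    qed
    finally have J_eq: "J = (\<integral>\<^sup>+ u. ennreal (u^2 * fz u) * indicator {0<..<v} u * ennreal (1 / u - 1 / v) \<partial>lborel)" .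
    have Ir_eq2: "ennreal (Ir v / v) = (\<integral>\<^sup>+ u. ennreal (u^2 * fz u) * indicator {0<..<v} u * ennreal (1 / v) \<partial>lborel)"
    proof -
      have "ennreal (Ir v / v) = ennreal (Ir v) * ennreal (1 / v)"
        using Ir_nn(2)[OF v] v by (simp add: ennreal_mult[symmetric])
      also have "\<dots> = Jn v * ennreal (1 / v)" using Ir_nn(1)[OF v] by simp
      also have "\<dots> = (\<integral>\<^sup>+ u. ennreal (u^2 * fz u) * indicator {0<..<v} u * ennreal (1 / v) \<partial>lborel)"
        unfolding Jn_def by (rule nn_integral_multc[symmetric]) measurable
      finally show ?thesis .
    qed
    have "J + ennreal (Ir v / v) = (\<integral>\<^sup>+ u. ennreal (u^2 * fz u) * indicator {0<..<v} u * ennreal (1 / u - 1 / v)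
        + ennreal (u^2 * fz u) * indicator {0<..<v} u * ennreal (1 / v) \<partial>lborel)"
      unfolding J_eq Ir_eq2 by (rule nn_integral_add[symmetric]) auto
    also have "\<dots> = S"
      unfolding S_def
    proof (rule nn_integral_cong)
      fix u :: real
      show "ennreal (u^2 * fz u) * indicator {0<..<v} u * ennreal (1 / u - 1 / v) + ennreal (u^2 * fz u) * indicator {0<..<v} u * ennreal (1 / v)
          = ennreal (u * fz u) * indicator {0<..<v} u"
      proof (cases "u \<in> {0<..<v}")
        case True
        then have u: "0 < u" "u < v" by auto
        have le: "1 / v \<le> 1 / u" using u by (simp add: frac_le)
        have "ennreal (1 / u - 1 / v) + ennreal (1 / v) = ennreal (1 / u)"
          using le v by (subst ennreal_plus[symmetric]) auto
        then have "ennreal (u^2 * fz u) * ennreal (1 / u - 1 / v) + ennreal (u^2 * fz u) * ennreal (1 / v)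
            = ennreal (u^2 * fz u) * ennreal (1 / u)"
          by (metis distrib_left)
        also have "\<dots> = ennreal (u * fz u)"
          using u fz_nonneg[of u] by (simp add: ennreal_mult[symmetric] power2_eq_square)
        finally show ?thesis using True by simp
      qed simp
    qed
    finally show ?thesis .
  qed
  have c: "J < \<infinity>"
  proof -
    have "J \<le> S" using b by (metis le_iff_add)
    also have "S \<le> (\<integral>\<^sup>+ s. ennreal (fz s) \<partial>lborel)"
      unfolding S_def
    proof (rule nn_integral_mono)
      fix s show "ennreal (s * fz s) * indicator {0<..<v} s \<le> ennreal (fz s)"
      proof (cases "s \<in> {0<..<v}")
        case True
        then have "s * fz s \<le> 1 * fz s" using v fz_nonneg[of s] by (intro mult_right_mono) auto
        then show ?thesis using True by (simp add: ennreal_leI)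
      qed simp
    qed
    also have "\<dots> < \<infinity>" by (rule fz_int_fin)
    finally show ?thesis .
  qed
  from a b have "J + (\<integral>\<^sup>+ s. ennreal (gz s) * indicator {0<..<v} s \<partial>lborel) = J + ennreal (Ir v / v)"
    by (metis add.commute)
  then have "J = \<infinity> \<or> (\<integral>\<^sup>+ s. ennreal (gz s) * indicator {0<..<v} s \<partial>lborel) = ennreal (Ir v / v)"
    by (simp only: ennreal_add_left_cancel)
  then show ?thesis using c by auto
qed

end

lemma nn_integral_Ioc_Ioo:
  fixes a b :: real
  shows "(\<integral>\<^sup>+ x. h x * indicator {a<..b} x \<partial>lborel) = (\<integral>\<^sup>+ x. h x * indicator {a<..<b} x \<partial>lborel)"
proof (rule nn_integral_cong_AE)
  have "AE x in lborel. x \<noteq> b" by (rule AE_lborel_singleton)+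
  then show "AE x in lborel. h x * indicator {a<..b} x = h x * indicator {a<..<b} x"
    by eventually_elim (auto simp: indicator_def)
qed

context setting begin

abbreviation "dens \<equiv> pistar_dens f"

lemma dens_eq: "dens v = (if 0 < snd v \<and> snd v \<le> fst v \<and> fst v < 1 then gz (snd v) / (fst v)^2
     else if 0 < fst v \<and> fst v < snd v \<and> snd v < 1 then gz (fst v) / (snd v)^2 else 0)"
  by (auto simp: pistar_dens_def gz_def Let_def indicator_def)

lemma dens_meas_borel[measurable]: "(\<lambda>v. dens v) \<in> borel_measurable borel"
proof -
  have "(\<lambda>v::real\<times>real. (if 0 < snd v \<and> snd v \<le> fst v \<and> fst v < 1 then gz (snd v) / (fst v)^2
     else if 0 < fst v \<and> fst v < snd v \<and> snd v < 1 then gz (fst v) / (snd v)^2 else 0)) \<in> borel_measurable (borel \<Otimes>\<^sub>M borel)"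
    by measurable
  then show ?thesis by (simp add: borel_prod dens_eq[abs_def])
qed

lemma dens_meas[measurable]: "(\<lambda>v. dens v) \<in> borel_measurable (lborel \<Otimes>\<^sub>M lborel)"
  using dens_meas_borel by (simp add: lborel_prod)

lemma dens_nonneg: "0 \<le> dens v"
  unfolding dens_eq using gz_nonneg by auto

lemma dens_sym: "dens (x, y) = dens (y, x)"
  unfolding dens_eq by auto

lemma dens_zero: "\<not> (x \<in> {0<..<1} \<and> y \<in> {0<..<1}) \<Longrightarrow> dens (x, y) = 0"
  unfolding dens_eq by auto

lemma dens_row:
  assumes x: "x \<in> {0<..<1}"
  shows "(\<integral>\<^sup>+ y. ennreal (dens (x, y)) \<partial>lborel) = ennreal (Ir x / x^3 + gz x * (1 / x - 1))"
proof -
  have x0: "0 < x" "x < 1" using x by auto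
  have "(\<integral>\<^sup>+ y. ennreal (dens (x, y)) \<partial>lborel)
      = (\<integral>\<^sup>+ y. ennreal (1 / x^2) * (ennreal (gz y) * indicator {0<..x} y)
            + ennreal (gz x) * (ennreal (1 / y^2) * indicator {x<..<1} y) \<partial>lborel)"
  proof (rule nn_integral_cong)
    fix y :: real
    show "ennreal (dens (x, y)) = ennreal (1 / x^2) * (ennreal (gz y) * indicator {0<..x} y)
            + ennreal (gz x) * (ennreal (1 / y^2) * indicator {x<..<1} y)"
    proof (cases "0 < y \<and> y \<le> x")
      case True
      have d: "dens (x, y) = (1 / x^2) * gz y" using True x0 by (simp add: dens_eq)
      have "ennreal ((1 / x^2) * gz y) = ennreal (1 / x^2) * ennreal (gz y)"
        using gz_nonneg[of y] by (intro ennreal_mult) auto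
      then show ?thesis using True unfolding d by (simp add: indicator_def)
    next
      case F1: False
      show ?thesis
      proof (cases "x < y \<and> y < 1")
        case True
        have d: "dens (x, y) = gz x * (1 / y^2)" using True x0 by (simp add: dens_eq)
        have "ennreal (gz x * (1 / y^2)) = ennreal (gz x) * ennreal (1 / y^2)"
          using gz_nonneg[of x] by (intro ennreal_mult) auto
        then show ?thesis using True F1 unfolding d by (simp add: indicator_def)
      next
        case False
        have d: "dens (x, y) = 0" using False F1 x0 unfolding dens_eq by auto
        show ?thesis using False F1 unfolding d by (simp add: indicator_def)
      qed
    qed
  qed
  also have "\<dots> = ennreal (1 / x^2) * (\<integral>\<^sup>+ y. ennreal (gz y) * indicator {0<..x} y \<partial>lborel)
      + ennreal (gz x) * (\<integral>\<^sup>+ y. ennreal (1 / y^2) * indicator {x<..<1} y \<partial>lborel)"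
  proof -
    have "(\<integral>\<^sup>+ y. ennreal (1 / x^2) * (ennreal (gz y) * indicator {0<..x} y)
            + ennreal (gz x) * (ennreal (1 / y^2) * indicator {x<..<1} y) \<partial>lborel)
        = (\<integral>\<^sup>+ y. ennreal (1 / x^2) * (ennreal (gz y) * indicator {0<..x} y) \<partial>lborel)
          + (\<integral>\<^sup>+ y. ennreal (gz x) * (ennreal (1 / y^2) * indicator {x<..<1} y) \<partial>lborel)"
      by (rule nn_integral_add; measurable)
    also have "(\<integral>\<^sup>+ y. ennreal (1 / x^2) * (ennreal (gz y) * indicator {0<..x} y) \<partial>lborel)
        = ennreal (1 / x^2) * (\<integral>\<^sup>+ y. ennreal (gz y) * indicator {0<..x} y \<partial>lborel)"
      by (rule nn_integral_cmult) measurable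
    also have "(\<integral>\<^sup>+ y. ennreal (gz x) * (ennreal (1 / y^2) * indicator {x<..<1} y) \<partial>lborel)
        = ennreal (gz x) * (\<integral>\<^sup>+ y. ennreal (1 / y^2) * indicator {x<..<1} y \<partial>lborel)"
      by (rule nn_integral_cmult) measurable
    finally show ?thesis .
  qed
  also have "(\<integral>\<^sup>+ y. ennreal (gz y) * indicator {0<..x} y \<partial>lborel) = ennreal (Ir x / x)"
    unfolding nn_integral_Ioc_Ioo using x0 by (intro Gid) auto
  also have "(\<integral>\<^sup>+ y. ennreal (1 / y^2) * indicator {x<..<1} y \<partial>lborel) = ennreal (1 / x - 1)"
    unfolding nn_integral_Ioo_Icc using x0 by (subst inv_sq_integral) auto
  also have "ennreal (1 / x^2) * ennreal (Ir x / x) + ennreal (gz x) * ennreal (1 / x - 1)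
      = ennreal (Ir x / x^3 + gz x * (1 / x - 1))"
  proof -
    have i: "0 \<le> Ir x" using Ir_nn(2)[of x] x0 by auto
    have o: "0 \<le> 1 / x - 1" using x0 by (simp add: field_simps)
    have "ennreal (1 / x^2) * ennreal (Ir x / x) = ennreal (Ir x / x^3)"
      using i x0 by (simp add: ennreal_mult[symmetric] power2_eq_square power3_eq_cube)
    moreover have "ennreal (gz x) * ennreal (1 / x - 1) = ennreal (gz x * (1 / x - 1))"
      using o gz_nonneg[of x] by (simp add: ennreal_mult[symmetric])
    moreover have "0 \<le> Ir x / x^3" using i x0 by simp
    moreover have "0 \<le> gz x * (1 / x - 1)" using o gz_nonneg[of x] by simp
    ultimately show ?thesis by (simp only: ennreal_plus)
  qed
  finally show ?thesis .
qed

lemma dens_marg: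
  assumes x: "x \<in> {0<..<1}"
  shows "(\<integral>\<^sup>+ y. ennreal (dens (x, y)) \<partial>lborel) + ennreal (gz x) = ennreal (f x)"
proof -
  have x0: "0 < x" "x < 1" using x by auto
  have i: "0 \<le> Ir x" using Ir_nn(2)[of x] x0 by auto
  have o: "0 \<le> 1 / x - 1" using x0 by (simp add: field_simps)
  have gx: "gz x = x * f x - Ir x / x^2" using x0 by (simp add: gz_def gstar_eq)
  have "gz x * (1 / x - 1) + gz x = gz x / x" using x0 by (simp add: field_simps)
  also have "\<dots> = f x - Ir x / x^3" unfolding gx using x0 by (simp add: field_simps power2_eq_square power3_eq_cube)
  finally have e: "Ir x / x^3 + gz x * (1 / x - 1) + gz x = f x" by simp
  have n1: "0 \<le> Ir x / x^3 + gz x * (1 / x - 1)" using i x0 o gz_nonneg[of x] by simp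
  have "ennreal (Ir x / x^3 + gz x * (1 / x - 1)) + ennreal (gz x) = ennreal (Ir x / x^3 + gz x * (1 / x - 1) + gz x)"
    using n1 gz_nonneg[of x] by (simp only: ennreal_plus)
  then show ?thesis unfolding dens_row[OF x] e .
qed

lemma dens_col:
  assumes y: "y \<in> {0<..<1}"
  shows "(\<integral>\<^sup>+ x. ennreal (dens (x, y)) \<partial>lborel) + ennreal (gz y) = ennreal (f y)"
proof -
  have "(\<integral>\<^sup>+ x. ennreal (dens (x, y)) \<partial>lborel) = (\<integral>\<^sup>+ x. ennreal (dens (y, x)) \<partial>lborel)"
    by (rule nn_integral_cong) (simp only: dens_sym)
  then show ?thesis using dens_marg[OF y] by simp
qed

end

context setting begin

lemma dens_cond:
  assumes y: "y \<in> {0<..<1}" and s: "s \<in> {0<..<1}"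
  shows "ennreal (s * dens (s, y)) \<le> (\<integral>\<^sup>+ x. ennreal (dens (x, y)) * indicator {s..<1} x \<partial>lborel) + ennreal (gz y)"
proof (cases "y \<le> s")
  case True
  have y0: "0 < y" "y < 1" and s0: "0 < s" "s < 1" using y s by auto
  have d: "dens (s, y) = (1 / s^2) * gz y" using True y0 s0 by (simp add: dens_eq)
  have "(\<integral>\<^sup>+ x. ennreal (dens (x, y)) * indicator {s..<1} x \<partial>lborel)
      = (\<integral>\<^sup>+ x. ennreal (gz y) * (ennreal (1 / x^2) * indicator {s..<1} x) \<partial>lborel)"
  proof (rule nn_integral_cong)
    fix x :: real
    show "ennreal (dens (x, y)) * indicator {s..<1} x = ennreal (gz y) * (ennreal (1 / x^2) * indicator {s..<1} x)"
    proof (cases "x \<in> {s..<1}")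
      case True
      have "dens (x, y) = gz y * (1 / x^2)" using True \<open>y \<le> s\<close> y0 s0 by (simp add: dens_eq)
      moreover have "ennreal (gz y * (1 / x^2)) = ennreal (gz y) * ennreal (1 / x^2)"
        using gz_nonneg[of y] by (intro ennreal_mult) auto
      ultimately show ?thesis using True by simp
    qed simp
  qed
  also have "\<dots> = ennreal (gz y) * (\<integral>\<^sup>+ x. ennreal (1 / x^2) * indicator {s..<1} x \<partial>lborel)"
    by (rule nn_integral_cmult) measurable
  also have "(\<integral>\<^sup>+ x. ennreal (1 / x^2) * indicator {s..<1} x \<partial>lborel) = ennreal (1 / s - 1)"
    unfolding nn_integral_Ico_Icc using s0 by (subst inv_sq_integral) auto
  finally have I: "(\<integral>\<^sup>+ x. ennreal (dens (x, y)) * indicator {s..<1} x \<partial>lborel) = ennreal (gz y) * ennreal (1 / s - 1)" .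
  have o: "0 \<le> 1 / s - 1" using s0 by (simp add: field_simps)
  have "ennreal (gz y) * ennreal (1 / s - 1) = ennreal (gz y * (1 / s - 1))"
    using o gz_nonneg[of y] by (intro ennreal_mult[symmetric]) auto
  moreover have "0 \<le> gz y * (1 / s - 1)" using o gz_nonneg[of y] by simp
  ultimately have "ennreal (gz y) * ennreal (1 / s - 1) + ennreal (gz y) = ennreal (gz y * (1 / s - 1) + gz y)"
    using gz_nonneg[of y] by (simp only: ennreal_plus)
  also have "gz y * (1 / s - 1) + gz y = s * dens (s, y)"
    unfolding d using s0 by (simp add: field_simps power2_eq_square)
  finally show ?thesis unfolding I by simp
next
  case False
  then have sy: "s < y" by simp
  have y0: "0 < y" "y < 1" and s0: "0 < s" "s < 1" using y s by auto
  have d: "dens (s, y) = gz s / y^2" using sy y0 s0 by (simp add: dens_eq)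
  have "(\<integral>\<^sup>+ x. ennreal (dens (x, y)) * indicator {s..<1} x \<partial>lborel)
      = (\<integral>\<^sup>+ x. ennreal (1 / y^2) * (ennreal (gz x) * indicator {s..<y} x)
           + ennreal (gz y) * (ennreal (1 / x^2) * indicator {y..<1} x) \<partial>lborel)"
  proof (rule nn_integral_cong)
    fix x :: real
    show "ennreal (dens (x, y)) * indicator {s..<1} x
        = ennreal (1 / y^2) * (ennreal (gz x) * indicator {s..<y} x) + ennreal (gz y) * (ennreal (1 / x^2) * indicator {y..<1} x)"
    proof (cases "x \<in> {s..<y}")
      case True
      have "dens (x, y) = (1 / y^2) * gz x" using True sy y0 s0 by (simp add: dens_eq)
      moreover have "ennreal ((1 / y^2) * gz x) = ennreal (1 / y^2) * ennreal (gz x)"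
        using gz_nonneg[of x] by (intro ennreal_mult) auto
      ultimately show ?thesis using True sy y0 by (simp add: indicator_def)
    next
      case F1: False
      show ?thesis
      proof (cases "x \<in> {y..<1}")
        case True
        have "dens (x, y) = gz y * (1 / x^2)" using True sy y0 s0 by (simp add: dens_eq)
        moreover have "ennreal (gz y * (1 / x^2)) = ennreal (gz y) * ennreal (1 / x^2)"
          using gz_nonneg[of y] by (intro ennreal_mult) auto
        ultimately show ?thesis using True F1 sy by (simp add: indicator_def)
      next
        case False
        then show ?thesis using F1 sy by (auto simp: indicator_def)
      qed
    qed
  qed
  also have "\<dots> = ennreal (1 / y^2) * (\<integral>\<^sup>+ x. ennreal (gz x) * indicator {s..<y} x \<partial>lborel)
      + ennreal (gz y) * (\<integral>\<^sup>+ x. ennreal (1 / x^2) * indicator {y..<1} x \<partial>lborel)"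
  proof -
    have "(\<integral>\<^sup>+ x. ennreal (1 / y^2) * (ennreal (gz x) * indicator {s..<y} x)
           + ennreal (gz y) * (ennreal (1 / x^2) * indicator {y..<1} x) \<partial>lborel)
        = (\<integral>\<^sup>+ x. ennreal (1 / y^2) * (ennreal (gz x) * indicator {s..<y} x) \<partial>lborel)
          + (\<integral>\<^sup>+ x. ennreal (gz y) * (ennreal (1 / x^2) * indicator {y..<1} x) \<partial>lborel)"
      by (rule nn_integral_add; measurable)
    also have "(\<integral>\<^sup>+ x. ennreal (1 / y^2) * (ennreal (gz x) * indicator {s..<y} x) \<partial>lborel)
        = ennreal (1 / y^2) * (\<integral>\<^sup>+ x. ennreal (gz x) * indicator {s..<y} x \<partial>lborel)"
      by (rule nn_integral_cmult) measurable
    also have "(\<integral>\<^sup>+ x. ennreal (gz y) * (ennreal (1 / x^2) * indicator {y..<1} x) \<partial>lborel)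
        = ennreal (gz y) * (\<integral>\<^sup>+ x. ennreal (1 / x^2) * indicator {y..<1} x \<partial>lborel)"
      by (rule nn_integral_cmult) measurable
    finally show ?thesis .
  qed
  also have "(\<integral>\<^sup>+ x. ennreal (1 / x^2) * indicator {y..<1} x \<partial>lborel) = ennreal (1 / y - 1)"
    unfolding nn_integral_Ico_Icc using y0 by (subst inv_sq_integral) auto
  also have X: "(\<integral>\<^sup>+ x. ennreal (gz x) * indicator {s..<y} x \<partial>lborel) = ennreal (Ir y / y - Ir s / s)"
  proof -
    define X where "X = (\<integral>\<^sup>+ x. ennreal (gz x) * indicator {s..<y} x \<partial>lborel)"
    have "ennreal (Ir y / y) = (\<integral>\<^sup>+ x. ennreal (gz x) * indicator {0<..<y} x \<partial>lborel)"
      using y0 by (intro Gid[symmetric]) auto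
    also have "\<dots> = (\<integral>\<^sup>+ x. ennreal (gz x) * indicator {0<..<s} x + ennreal (gz x) * indicator {s..<y} x \<partial>lborel)"
      by (rule nn_integral_cong) (use sy s0 in \<open>auto simp: indicator_def\<close>)
    also have "\<dots> = (\<integral>\<^sup>+ x. ennreal (gz x) * indicator {0<..<s} x \<partial>lborel) + X"
      unfolding X_def by (rule nn_integral_add; measurable)
    also have "(\<integral>\<^sup>+ x. ennreal (gz x) * indicator {0<..<s} x \<partial>lborel) = ennreal (Ir s / s)"
      using s0 by (intro Gid) auto
    finally have e: "ennreal (Ir y / y) = ennreal (Ir s / s) + X" .
    have is0: "0 \<le> Ir s / s" using Ir_nn(2)[of s] s0 by simp
    have "X = (ennreal (Ir s / s) + X) - ennreal (Ir s / s)" by simp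
    also have "\<dots> = ennreal (Ir y / y) - ennreal (Ir s / s)" using e by simp
    also have "\<dots> = ennreal (Ir y / y - Ir s / s)" using is0 by (rule ennreal_minus)
    finally show ?thesis unfolding X_def .
  qed
  finally have I: "(\<integral>\<^sup>+ x. ennreal (dens (x, y)) * indicator {s..<1} x \<partial>lborel)
      = ennreal (1 / y^2) * ennreal (Ir y / y - Ir s / s) + ennreal (gz y) * ennreal (1 / y - 1)" .
  have ord: "Ir s / s \<le> Ir y / y"
  proof -
    have "ennreal (Ir s / s) \<le> ennreal (Ir s / s) + (\<integral>\<^sup>+ x. ennreal (gz x) * indicator {s..<y} x \<partial>lborel)" by simp
    also have "\<dots> = (\<integral>\<^sup>+ x. ennreal (gz x) * indicator {0<..<s} x \<partial>lborel) + (\<integral>\<^sup>+ x. ennreal (gz x) * indicator {s..<y} x \<partial>lborel)"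
      using s0 by (simp add: Gid)
    also have "\<dots> = (\<integral>\<^sup>+ x. ennreal (gz x) * indicator {0<..<s} x + ennreal (gz x) * indicator {s..<y} x \<partial>lborel)"
      by (rule nn_integral_add[symmetric]; measurable)
    also have "\<dots> = (\<integral>\<^sup>+ x. ennreal (gz x) * indicator {0<..<y} x \<partial>lborel)"
      by (rule nn_integral_cong) (use sy s0 in \<open>auto simp: indicator_def\<close>)
    also have "\<dots> = ennreal (Ir y / y)" using y0 by (intro Gid) auto
    finally show ?thesis using Ir_nn(2)[of y] y0 by (subst (asm) ennreal_le_iff) auto
  qed
  have o: "0 \<le> 1 / y - 1" using y0 by (simp add: field_simps)
  have n1: "0 \<le> (1 / y^2) * (Ir y / y - Ir s / s)" using ord by simp
  have n2: "0 \<le> gz y * (1 / y - 1)" using o gz_nonneg[of y] by simp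
  have R: "ennreal (1 / y^2) * ennreal (Ir y / y - Ir s / s) + ennreal (gz y) * ennreal (1 / y - 1) + ennreal (gz y)
      = ennreal ((1 / y^2) * (Ir y / y - Ir s / s) + gz y * (1 / y - 1) + gz y)"
  proof -
    have "ennreal (1 / y^2) * ennreal (Ir y / y - Ir s / s) = ennreal ((1 / y^2) * (Ir y / y - Ir s / s))"
      using ord by (intro ennreal_mult[symmetric]) auto
    moreover have "ennreal (gz y) * ennreal (1 / y - 1) = ennreal (gz y * (1 / y - 1))"
      using o gz_nonneg[of y] by (intro ennreal_mult[symmetric]) auto
    ultimately show ?thesis using n1 n2 gz_nonneg[of y] by (simp only: ennreal_plus add_nonneg_nonneg)
  qed
  have rineq: "s * dens (s, y) \<le> (1 / y^2) * (Ir y / y - Ir s / s) + gz y * (1 / y - 1) + gz y"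
  proof -
    have gs: "gz s = s * f s - Ir s / s^2" using s0 by (simp add: gz_def gstar_eq)
    have gy: "gz y = y * f y - Ir y / y^2" using y0 by (simp add: gz_def gstar_eq)
    have L: "s * dens (s, y) = s^2 * f s / y^2 - Ir s / (s * y^2)"
      unfolding d gs using s0 y0 by (simp add: field_simps power2_eq_square)
    have Rr: "(1 / y^2) * (Ir y / y - Ir s / s) + gz y * (1 / y - 1) + gz y = f y - Ir s / (s * y^2)"
      unfolding gy using s0 y0 by (simp add: field_simps power2_eq_square)
    have "s^2 * f s \<le> y^2 * f y" using sq_mono[of s y] s0 y0 sy by simp
    then have "s^2 * f s / y^2 \<le> y^2 * f y / y^2" by (intro divide_right_mono) auto
    also have "\<dots> = f y" using y0 by simp
    finally show ?thesis unfolding L Rr by simp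
  qed
  have "ennreal (s * dens (s, y)) \<le> ennreal ((1 / y^2) * (Ir y / y - Ir s / s) + gz y * (1 / y - 1) + gz y)"
    using rineq by (rule ennreal_leI)
  then show ?thesis unfolding I R[symmetric] .
qed

end

lemma borel_pair_meas1[measurable]: "(\<lambda>y::real. (c::real, y)) \<in> measurable borel borel"
proof -
  have "(\<lambda>y::real. (c::real, y)) \<in> measurable borel (borel \<Otimes>\<^sub>M borel)" by measurable
  then show ?thesis by (simp add: borel_prod)
qed

lemma borel_pair_meas2[measurable]: "(\<lambda>x::real. (x, c::real)) \<in> measurable borel borel"
proof -
  have "(\<lambda>x::real. (x, c::real)) \<in> measurable borel (borel \<Otimes>\<^sub>M borel)" by measurable
  then show ?thesis by (simp add: borel_prod)
qed

context setting begin

definition c5 :: real where "c5 = F1 - Ir 1"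

lemma c5_nonneg: "0 \<le> c5"
  using reg2 by (simp add: c5_def Ir_def)

definition M1 :: "(real \<times> real) measure" where "M1 = scale_measure (ennreal F0) (return borel (0, 0))"
definition M2 :: "(real \<times> real) measure" where "M2 = density lborel (\<lambda>v. ennreal (dens v))"
definition M3 :: "(real \<times> real) measure" where "M3 = distr (density lborel (\<lambda>y. ennreal (gz y))) borel (\<lambda>y. (1, y))"
definition M4 :: "(real \<times> real) measure" where "M4 = distr (density lborel (\<lambda>x. ennreal (gz x))) borel (\<lambda>x. (x, 1))"
definition M5 :: "(real \<times> real) measure" where "M5 = scale_measure (ennreal c5) (return borel (1, 1))"

lemma sets_M[simp]: "sets M1 = sets borel" "sets M2 = sets borel" "sets M3 = sets borel" "sets M4 = sets borel" "sets M5 = sets borel"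
  by (simp_all add: M1_def M2_def M3_def M4_def M5_def)

lemma space_M1[simp]: "space M1 = UNIV" by (simp add: M1_def space_scale_measure)

abbreviation "S4 \<equiv> madd (madd (madd M1 M2) M3) M4"

lemma sets_S[simp]: "sets (madd M1 M2) = sets borel" "sets (madd (madd M1 M2) M3) = sets borel" "sets S4 = sets borel"
  by simp_all

lemma emeasure_M:
  assumes A: "A \<in> sets borel"
  shows "emeasure M1 A = ennreal F0 * indicator A (0, 0)"
    "emeasure M2 A = (\<integral>\<^sup>+ v. indicator A v * ennreal (dens v) \<partial>lborel)"
    "emeasure M3 A = (\<integral>\<^sup>+ y. indicator A (1, y) * indicator {0<..<1} y * ennreal (gstar f y) \<partial>lborel)"
    "emeasure M4 A = (\<integral>\<^sup>+ x. indicator A (x, 1) * indicator {0<..<1} x * ennreal (gstar f x) \<partial>lborel)"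
    "emeasure M5 A = ennreal c5 * indicator A (1, 1)"
proof -
  show "emeasure M1 A = ennreal F0 * indicator A (0, 0)" using A by (simp add: M1_def)
  show "emeasure M5 A = ennreal c5 * indicator A (1, 1)" using A by (simp add: M5_def)
  show "emeasure M2 A = (\<integral>\<^sup>+ v. indicator A v * ennreal (dens v) \<partial>lborel)"
    using A by (simp add: M2_def emeasure_density mult.commute)
  have gzI: "ennreal (gz y) * indicator B y = indicator B y * indicator {0<..<1} y * ennreal (gstar f y)" for B y
    by (auto simp: gz_def indicator_def)
  have "emeasure M3 A = emeasure (density lborel (\<lambda>y. ennreal (gz y))) ((\<lambda>y. (1::real, y)) -` A \<inter> space (density lborel (\<lambda>y. ennreal (gz y))))"
    unfolding M3_def using A by (intro emeasure_distr) auto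
  also have "\<dots> = (\<integral>\<^sup>+ y. ennreal (gz y) * indicator ((\<lambda>y. (1::real, y)) -` A) y \<partial>lborel)"
  proof -
    have "(\<lambda>y. (1::real, y)) -` A \<in> sets borel" using measurable_sets[OF borel_pair_meas1 A] by simp
    then show ?thesis by (simp add: emeasure_density)
  qed
  also have "\<dots> = (\<integral>\<^sup>+ y. indicator A (1, y) * indicator {0<..<1} y * ennreal (gstar f y) \<partial>lborel)"
    by (rule nn_integral_cong) (auto simp: gz_def indicator_def)
  finally show "emeasure M3 A = (\<integral>\<^sup>+ y. indicator A (1, y) * indicator {0<..<1} y * ennreal (gstar f y) \<partial>lborel)" .
  have "emeasure M4 A = emeasure (density lborel (\<lambda>x. ennreal (gz x))) ((\<lambda>x. (x, 1::real)) -` A \<inter> space (density lborel (\<lambda>x. ennreal (gz x))))"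
    unfolding M4_def using A by (intro emeasure_distr) auto
  also have "\<dots> = (\<integral>\<^sup>+ x. ennreal (gz x) * indicator ((\<lambda>x. (x, 1::real)) -` A) x \<partial>lborel)"
  proof -
    have "(\<lambda>x. (x, 1::real)) -` A \<in> sets borel" using measurable_sets[OF borel_pair_meas2 A] by simp
    then show ?thesis by (simp add: emeasure_density)
  qed
  also have "\<dots> = (\<integral>\<^sup>+ x. indicator A (x, 1) * indicator {0<..<1} x * ennreal (gstar f x) \<partial>lborel)"
    by (rule nn_integral_cong) (auto simp: gz_def indicator_def)
  finally show "emeasure M4 A = (\<integral>\<^sup>+ x. indicator A (x, 1) * indicator {0<..<1} x * ennreal (gstar f x) \<partial>lborel)" .
qed

lemma pistar_madd: "pistar F f = madd S4 M5"
proof -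
  have sp: "space S4 = UNIV" by simp
  have "madd S4 M5 = measure_of UNIV (sets borel) (\<lambda>A. emeasure S4 A + emeasure M5 A)"
    unfolding madd_def[of S4] sp sets_S ..
  also have "\<dots> = pistar F f"
    unfolding pistar_def
  proof (rule measure_of_eq)
    show "sets borel \<subseteq> Pow UNIV" by simp
    fix A assume "A \<in> sigma_sets UNIV (sets (borel :: (real \<times> real) measure))"
    then have A: "A \<in> sets borel" by (metis sets.sigma_sets_eq space_borel)
    show "emeasure S4 A + emeasure M5 A =
      ennreal (measure F {0}) * indicator A (0, 0)
        + (\<integral>\<^sup>+ v. indicator A v * ennreal (pistar_dens f v) \<partial>lborel)
        + (\<integral>\<^sup>+ y. indicator A (1, y) * indicator {0<..<1} y * ennreal (gstar f y) \<partial>lborel)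
        + (\<integral>\<^sup>+ x. indicator A (x, 1) * indicator {0<..<1} x * ennreal (gstar f x) \<partial>lborel)
        + ennreal (measure F {1} - (LINT s:{0<..<1}|lborel. s^2 * f s)) * indicator A (1, 1)"
      using A by (simp add: emeasure_madd emeasure_M c5_def Ir_def)
  qed
  finally show ?thesis ..
qed

lemma sets_pistar[simp]: "sets (pistar F f) = sets borel"
  by (simp add: pistar_madd)

lemma space_pistar[simp]: "space (pistar F f) = UNIV"
  by (simp add: pistar_madd)

lemma nn_integral_pistar:
  assumes h[measurable]: "h \<in> borel_measurable borel"
  shows "(\<integral>\<^sup>+ v. h v \<partial>pistar F f) = ennreal F0 * h (0, 0) + (\<integral>\<^sup>+ v. ennreal (dens v) * h v \<partial>lborel)
    + (\<integral>\<^sup>+ y. ennreal (gz y) * h (1, y) \<partial>lborel) + (\<integral>\<^sup>+ x. ennreal (gz x) * h (x, 1) \<partial>lborel)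
    + ennreal c5 * h (1, 1)"
proof -
  have m: "h \<in> borel_measurable S4" "h \<in> borel_measurable (madd (madd M1 M2) M3)"
    "h \<in> borel_measurable (madd M1 M2)" "h \<in> borel_measurable M1"
    by (simp_all cong: measurable_cong_sets)
  have "(\<integral>\<^sup>+ v. h v \<partial>pistar F f) = (\<integral>\<^sup>+ v. h v \<partial>M1) + (\<integral>\<^sup>+ v. h v \<partial>M2) + (\<integral>\<^sup>+ v. h v \<partial>M3)
      + (\<integral>\<^sup>+ v. h v \<partial>M4) + (\<integral>\<^sup>+ v. h v \<partial>M5)"
    unfolding pistar_madd
    by (simp add: nn_integral_madd[OF _ m(1)] nn_integral_madd[OF _ m(2)] nn_integral_madd[OF _ m(3)]
        nn_integral_madd[OF _ m(4)])
  also have "(\<integral>\<^sup>+ v. h v \<partial>M1) = ennreal F0 * h (0, 0)"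
    by (simp add: M1_def nn_integral_scale_measure nn_integral_return)
  also have "(\<integral>\<^sup>+ v. h v \<partial>M5) = ennreal c5 * h (1, 1)"
    by (simp add: M5_def nn_integral_scale_measure nn_integral_return)
  also have "(\<integral>\<^sup>+ v. h v \<partial>M2) = (\<integral>\<^sup>+ v. ennreal (dens v) * h v \<partial>lborel)"
    unfolding M2_def by (rule nn_integral_density) measurable
  also have "(\<integral>\<^sup>+ v. h v \<partial>M3) = (\<integral>\<^sup>+ y. ennreal (gz y) * h (1, y) \<partial>lborel)"
    unfolding M3_def by (simp add: nn_integral_distr nn_integral_density)
  also have "(\<integral>\<^sup>+ v. h v \<partial>M4) = (\<integral>\<^sup>+ x. ennreal (gz x) * h (x, 1) \<partial>lborel)"
    unfolding M4_def by (simp add: nn_integral_distr nn_integral_density)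
  finally show ?thesis .
qed

end

lemma tonelli1:
  fixes h :: "real \<times> real \<Rightarrow> ennreal"
  assumes "h \<in> borel_measurable (lborel \<Otimes>\<^sub>M lborel)"
  shows "(\<integral>\<^sup>+ v. h v \<partial>lborel) = (\<integral>\<^sup>+ x. (\<integral>\<^sup>+ y. h (x, y) \<partial>lborel) \<partial>lborel)"
  using lborel.nn_integral_fst[OF assms] by (simp add: lborel_prod)

lemma tonelli2:
  fixes h :: "real \<times> real \<Rightarrow> ennreal"
  assumes "h \<in> borel_measurable (lborel \<Otimes>\<^sub>M lborel)"
  shows "(\<integral>\<^sup>+ v. h v \<partial>lborel) = (\<integral>\<^sup>+ y. (\<integral>\<^sup>+ x. h (x, y) \<partial>lborel) \<partial>lborel)"
  using lborel_pair.nn_integral_snd[OF assms] by (simp add: lborel_prod)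

lemma fst_borel[measurable]: "fst \<in> measurable (borel :: (real \<times> real) measure) borel"
  using measurable_fst[of "borel :: real measure" "borel :: real measure"] by (simp add: borel_prod)

lemma snd_borel[measurable]: "snd \<in> measurable (borel :: (real \<times> real) measure) borel"
  using measurable_snd[of "borel :: real measure" "borel :: real measure"] by (simp add: borel_prod)

context setting begin

interpretation Fp: prob_space F by (rule F_prob)

lemma fst_pistar[measurable]: "fst \<in> measurable (pistar F f) borel"
  using fst_borel by (simp cong: measurable_cong_sets)

lemma snd_pistar[measurable]: "snd \<in> measurable (pistar F f) borel"
  using snd_borel by (simp cong: measurable_cong_sets)

lemma gz_zero: "x \<notin> {0<..<1} \<Longrightarrow> gz x = 0"
  by (simp add: gz_def)

lemma G1: "(\<integral>\<^sup>+ x. ennreal (gz x) \<partial>lborel) = ennreal (Ir 1)"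
proof -
  have "(\<integral>\<^sup>+ x. ennreal (gz x) \<partial>lborel) = (\<integral>\<^sup>+ x. ennreal (gz x) * indicator {0<..<1} x \<partial>lborel)"
    by (rule nn_integral_cong) (auto simp: gz_def indicator_def)
  also have "\<dots> = ennreal (Ir 1 / 1)" by (rule Gid) auto
  finally show ?thesis by simp
qed

lemma G1c5: "ennreal (Ir 1) + ennreal c5 = ennreal F1"
proof -
  have "0 \<le> Ir 1" using Ir_nn(2)[of 1] by simp
  then have "ennreal (Ir 1) + ennreal c5 = ennreal (Ir 1 + c5)" using c5_nonneg by (intro ennreal_plus[symmetric])
  then show ?thesis by (simp add: c5_def)
qed

lemma row_zero: "x \<notin> {0<..<1} \<Longrightarrow> (\<integral>\<^sup>+ y. ennreal (dens (x, y)) \<partial>lborel) = 0"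
proof -
  assume x: "x \<notin> {0<..<1}"
  have "\<And>y. dens (x, y) = 0" using dens_zero x by blast
  then show ?thesis by simp
qed

lemma col_zero: "y \<notin> {0<..<1} \<Longrightarrow> (\<integral>\<^sup>+ x. ennreal (dens (x, y)) \<partial>lborel) = 0"
proof -
  assume y: "y \<notin> {0<..<1}"
  have "\<And>x. dens (x, y) = 0" using dens_zero y by blast
  then show ?thesis by simp
qed

lemma marg_pointwise:
  "indicator A x * (\<integral>\<^sup>+ y. ennreal (dens (x, y)) \<partial>lborel) + ennreal (gz x) * indicator A x
    = ennreal (f x) * indicator (A \<inter> {0<..<1}) x"
proof (cases "x \<in> {0<..<1}")
  case True
  then show ?thesis using dens_marg[OF True] by (auto simp: indicator_def)
qed (simp add: row_zero gz_zero)

lemma marg_pointwise2: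
  "indicator A y * (\<integral>\<^sup>+ x. ennreal (dens (x, y)) \<partial>lborel) + ennreal (gz y) * indicator A y
    = ennreal (f y) * indicator (A \<inter> {0<..<1}) y"
proof (cases "y \<in> {0<..<1}")
  case True
  then show ?thesis using dens_col[OF True] by (auto simp: indicator_def)
qed (simp add: col_zero gz_zero)

lemma pistar_fst:
  assumes A: "A \<in> sets borel"
  shows "emeasure (pistar F f) (fst -` A) = emeasure F A"
proof -
  have Am[measurable]: "A \<in> sets borel" by fact
  have fA: "fst -` A \<in> sets (borel :: (real \<times> real) measure)"
    using measurable_sets[OF fst_borel A] by simp
  have "emeasure (pistar F f) (fst -` A) = (\<integral>\<^sup>+ v. indicator (fst -` A) v \<partial>pistar F f)"
    using fA by simp
  also have "\<dots> = ennreal F0 * indicator A 0 + (\<integral>\<^sup>+ v. ennreal (dens v) * indicator A (fst v) \<partial>lborel)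
    + (\<integral>\<^sup>+ y. ennreal (gz y) * indicator A 1 \<partial>lborel) + (\<integral>\<^sup>+ x. ennreal (gz x) * indicator A x \<partial>lborel)
    + ennreal c5 * indicator A 1"
    using fA by (subst nn_integral_pistar) (auto simp: indicator_def)
  also have "(\<integral>\<^sup>+ v. ennreal (dens v) * indicator A (fst v) \<partial>lborel)
      = (\<integral>\<^sup>+ x. indicator A x * (\<integral>\<^sup>+ y. ennreal (dens (x, y)) \<partial>lborel) \<partial>lborel)"
  proof -
    have "(\<integral>\<^sup>+ v. ennreal (dens v) * indicator A (fst v) \<partial>lborel)
        = (\<integral>\<^sup>+ x. (\<integral>\<^sup>+ y. ennreal (dens (x, y)) * indicator A x \<partial>lborel) \<partial>lborel)"
    proof -
      have m: "(\<lambda>v. ennreal (dens v) * indicator A (fst v)) \<in> borel_measurable (lborel \<Otimes>\<^sub>M lborel)" by measurable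
      show ?thesis using tonelli1[OF m] by simp
    qed
    also have "\<dots> = (\<integral>\<^sup>+ x. indicator A x * (\<integral>\<^sup>+ y. ennreal (dens (x, y)) \<partial>lborel) \<partial>lborel)"
    proof (rule nn_integral_cong)
      fix x :: real
      have "(\<lambda>y. ennreal (dens (x, y))) \<in> borel_measurable lborel" by measurable
      from nn_integral_multc[OF this, of "indicator A x"]
      show "(\<integral>\<^sup>+ y. ennreal (dens (x, y)) * indicator A x \<partial>lborel) = indicator A x * (\<integral>\<^sup>+ y. ennreal (dens (x, y)) \<partial>lborel)"
        by (simp add: mult.commute)
    qed
    finally show ?thesis .
  qed
  also have "(\<integral>\<^sup>+ y. ennreal (gz y) * indicator A 1 \<partial>lborel) = ennreal (Ir 1) * indicator A 1"
    by (simp add: nn_integral_multc G1)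
  also have "ennreal F0 * indicator A 0 + (\<integral>\<^sup>+ x. indicator A x * (\<integral>\<^sup>+ y. ennreal (dens (x, y)) \<partial>lborel) \<partial>lborel)
    + ennreal (Ir 1) * indicator A 1 + (\<integral>\<^sup>+ x. ennreal (gz x) * indicator A x \<partial>lborel) + ennreal c5 * indicator A 1
    = ennreal F0 * indicator A 0 + ((\<integral>\<^sup>+ x. indicator A x * (\<integral>\<^sup>+ y. ennreal (dens (x, y)) \<partial>lborel) \<partial>lborel)
       + (\<integral>\<^sup>+ x. ennreal (gz x) * indicator A x \<partial>lborel)) + (ennreal (Ir 1) + ennreal c5) * indicator A 1"
    by (simp add: algebra_simps)
  also have "(\<integral>\<^sup>+ x. indicator A x * (\<integral>\<^sup>+ y. ennreal (dens (x, y)) \<partial>lborel) \<partial>lborel)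
       + (\<integral>\<^sup>+ x. ennreal (gz x) * indicator A x \<partial>lborel)
     = (\<integral>\<^sup>+ x. indicator A x * (\<integral>\<^sup>+ y. ennreal (dens (x, y)) \<partial>lborel) + ennreal (gz x) * indicator A x \<partial>lborel)"
    by (rule nn_integral_add[symmetric]) measurable
  also have "\<dots> = (\<integral>\<^sup>+ x. ennreal (f x) * indicator (A \<inter> {0<..<1}) x \<partial>lborel)"
    by (simp only: marg_pointwise)
  also have "ennreal F0 * indicator A 0 + (\<integral>\<^sup>+ x. ennreal (f x) * indicator (A \<inter> {0<..<1}) x \<partial>lborel)
      + (ennreal (Ir 1) + ennreal c5) * indicator A 1 = emeasure F A"
    unfolding G1c5 F_decomp[OF A] ..
  finally show ?thesis .
qed

lemma pistar_snd:
  assumes A: "A \<in> sets borel"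
  shows "emeasure (pistar F f) (snd -` A) = emeasure F A"
proof -
  have Am[measurable]: "A \<in> sets borel" by fact
  have fA: "snd -` A \<in> sets (borel :: (real \<times> real) measure)"
    using measurable_sets[OF snd_borel A] by simp
  have "emeasure (pistar F f) (snd -` A) = (\<integral>\<^sup>+ v. indicator (snd -` A) v \<partial>pistar F f)"
    using fA by simp
  also have "\<dots> = ennreal F0 * indicator A 0 + (\<integral>\<^sup>+ v. ennreal (dens v) * indicator A (snd v) \<partial>lborel)
    + (\<integral>\<^sup>+ y. ennreal (gz y) * indicator A y \<partial>lborel) + (\<integral>\<^sup>+ x. ennreal (gz x) * indicator A 1 \<partial>lborel)
    + ennreal c5 * indicator A 1"
    using fA by (subst nn_integral_pistar) (auto simp: indicator_def)
  also have "(\<integral>\<^sup>+ v. ennreal (dens v) * indicator A (snd v) \<partial>lborel)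
      = (\<integral>\<^sup>+ y. indicator A y * (\<integral>\<^sup>+ x. ennreal (dens (x, y)) \<partial>lborel) \<partial>lborel)"
  proof -
    have "(\<integral>\<^sup>+ v. ennreal (dens v) * indicator A (snd v) \<partial>lborel)
        = (\<integral>\<^sup>+ y. (\<integral>\<^sup>+ x. ennreal (dens (x, y)) * indicator A y \<partial>lborel) \<partial>lborel)"
    proof -
      have m: "(\<lambda>v. ennreal (dens v) * indicator A (snd v)) \<in> borel_measurable (lborel \<Otimes>\<^sub>M lborel)" by measurable
      show ?thesis using tonelli2[OF m] by simp
    qed
    also have "\<dots> = (\<integral>\<^sup>+ y. indicator A y * (\<integral>\<^sup>+ x. ennreal (dens (x, y)) \<partial>lborel) \<partial>lborel)"
    proof (rule nn_integral_cong)
      fix y :: real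
      have "(\<lambda>x. ennreal (dens (x, y))) \<in> borel_measurable lborel" by measurable
      from nn_integral_multc[OF this, of "indicator A y"]
      show "(\<integral>\<^sup>+ x. ennreal (dens (x, y)) * indicator A y \<partial>lborel) = indicator A y * (\<integral>\<^sup>+ x. ennreal (dens (x, y)) \<partial>lborel)"
        by (simp add: mult.commute)
    qed
    finally show ?thesis .
  qed
  also have "(\<integral>\<^sup>+ x. ennreal (gz x) * indicator A 1 \<partial>lborel) = ennreal (Ir 1) * indicator A 1"
    by (simp add: nn_integral_multc G1)
  also have "ennreal F0 * indicator A 0 + (\<integral>\<^sup>+ y. indicator A y * (\<integral>\<^sup>+ x. ennreal (dens (x, y)) \<partial>lborel) \<partial>lborel)
    + (\<integral>\<^sup>+ y. ennreal (gz y) * indicator A y \<partial>lborel) + ennreal (Ir 1) * indicator A 1 + ennreal c5 * indicator A 1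
    = ennreal F0 * indicator A 0 + ((\<integral>\<^sup>+ y. indicator A y * (\<integral>\<^sup>+ x. ennreal (dens (x, y)) \<partial>lborel) \<partial>lborel)
       + (\<integral>\<^sup>+ y. ennreal (gz y) * indicator A y \<partial>lborel)) + (ennreal (Ir 1) + ennreal c5) * indicator A 1"
    by (simp add: algebra_simps)
  also have "(\<integral>\<^sup>+ y. indicator A y * (\<integral>\<^sup>+ x. ennreal (dens (x, y)) \<partial>lborel) \<partial>lborel)
       + (\<integral>\<^sup>+ y. ennreal (gz y) * indicator A y \<partial>lborel)
     = (\<integral>\<^sup>+ y. indicator A y * (\<integral>\<^sup>+ x. ennreal (dens (x, y)) \<partial>lborel) + ennreal (gz y) * indicator A y \<partial>lborel)"
  proof (rule nn_integral_add[symmetric])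
    have "(\<lambda>(y, x). ennreal (dens (x, y))) \<in> borel_measurable (borel \<Otimes>\<^sub>M lborel)"
      using measurable_pair_swap[OF dens_meas] by (simp add: case_prod_beta)
    then have "(\<lambda>y. \<integral>\<^sup>+ x. ennreal (dens (x, y)) \<partial>lborel) \<in> borel_measurable borel"
      by (rule lborel.borel_measurable_nn_integral)
    then show "(\<lambda>y. indicator A y * (\<integral>\<^sup>+ x. ennreal (dens (x, y)) \<partial>lborel)) \<in> borel_measurable lborel"
      by simp
  qed measurable
  also have "\<dots> = (\<integral>\<^sup>+ y. ennreal (f y) * indicator (A \<inter> {0<..<1}) y \<partial>lborel)"
    by (simp only: marg_pointwise2)
  also have "ennreal F0 * indicator A 0 + (\<integral>\<^sup>+ y. ennreal (f y) * indicator (A \<inter> {0<..<1}) y \<partial>lborel)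
      + (ennreal (Ir 1) + ennreal c5) * indicator A 1 = emeasure F A"
    unfolding G1c5 F_decomp[OF A] ..
  finally show ?thesis .
qed

lemma pistar_prob: "prob_space (pistar F f)"
proof
  have "emeasure (pistar F f) (fst -` UNIV) = emeasure F UNIV" by (rule pistar_fst) simp
  then show "emeasure (pistar F f) (space (pistar F f)) = 1"
    using Fp.emeasure_space_1 F_space by simp
qed

lemma pistar_PiF: "pistar F f \<in> PiF F"
  unfolding PiF_def
proof (intro CollectI conjI)
  show "prob_space (pistar F f)" by (rule pistar_prob)
  show "sets (pistar F f) = sets borel" by simp
  show "distr (pistar F f) borel fst = F"
  proof (rule measure_eqI)
    show "sets (distr (pistar F f) borel fst) = sets F" using F_sets by simp
    fix A assume "A \<in> sets (distr (pistar F f) borel fst)"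
    then have A: "A \<in> sets borel" by simp
    have "emeasure (distr (pistar F f) borel fst) A = emeasure (pistar F f) (fst -` A \<inter> space (pistar F f))"
      using A by (intro emeasure_distr) auto
    also have "\<dots> = emeasure F A" using pistar_fst[OF A] by simp
    finally show "emeasure (distr (pistar F f) borel fst) A = emeasure F A" .
  qed
  show "distr (pistar F f) borel snd = F"
  proof (rule measure_eqI)
    show "sets (distr (pistar F f) borel snd) = sets F" using F_sets by simp
    fix A assume "A \<in> sets (distr (pistar F f) borel snd)"
    then have A: "A \<in> sets borel" by simp
    have "emeasure (distr (pistar F f) borel snd) A = emeasure (pistar F f) (snd -` A \<inter> space (pistar F f))"
      using A by (intro emeasure_distr) auto
    also have "\<dots> = emeasure F A" using pistar_snd[OF A] by simp
    finally show "emeasure (distr (pistar F f) borel snd) A = emeasure F A" .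
  qed
qed

end

definition Qf :: "real \<Rightarrow> real \<Rightarrow> real" where
  "Qf w b = (if w > b then w else if b > w then 0 else w / 2)"
definition Tf :: "real \<Rightarrow> real \<Rightarrow> real" where
  "Tf w b = (if w > b then (w^2 + b^2) / 2 else if b > w then 0 else w^2 / 2)"

lemma qstar_fst: "fst (qstar (w, b)) = Qf w b" by (simp add: qstar_def Qf_def Let_def)
lemma tstar_fst: "fst (tstar (w, b)) = Tf w b" by (simp add: tstar_def Tf_def Let_def)
lemma qstar_snd: "snd (qstar (b, w)) = Qf w b" by (simp add: qstar_def Qf_def Let_def)
lemma tstar_snd: "snd (tstar (b, w)) = Tf w b" by (auto simp: tstar_def Tf_def Let_def add.commute)

lemma phi_ic:
  fixes a b w :: real
  assumes "0 \<le> a" "0 \<le> b" "0 \<le> w"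
  shows "a * Qf a b - Tf a b \<ge> a * Qf w b - Tf w b" "a * Qf a b - Tf a b \<ge> 0"
proof -
  have s1: "0 \<le> (a - w)^2" by simp
  have s2: "0 \<le> (w - b)^2" by simp
  have m1: "0 \<le> a * a" "0 \<le> b * b" "0 \<le> a * b" "0 \<le> w * b" "0 \<le> a * w" using assms by auto
  show "a * Qf a b - Tf a b \<ge> 0"
  proof (cases "a > b")
    case True
    then have "b * b \<le> a * a" using assms by (intro mult_mono) auto
    then show ?thesis using True by (simp add: Qf_def Tf_def power2_eq_square)
  next
    case False
    then show ?thesis by (auto simp: Qf_def Tf_def power2_eq_square)
  qed
  define D where "D = a * Qf a b - Tf a b - (a * Qf w b - Tf w b)"
  have "D \<ge> 0"
  proof (cases "a > b")
    case ab: True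
    show ?thesis
    proof (cases "w > b")
      case True
      then have "D = (a - w)^2 / 2" using ab unfolding D_def Qf_def Tf_def by (simp add: power2_eq_square field_simps)
      then show ?thesis using zero_le_power2[of "a - w"] by linarith
    next
      case False
      show ?thesis
      proof (cases "w = b")
        case True
        then have "D = a * (a - b) / 2" using ab unfolding D_def Qf_def Tf_def by (simp add: power2_eq_square field_simps)
        moreover have "0 \<le> a * (a - b)" using ab assms by simp
        ultimately show ?thesis by linarith
      next
        case False
        then have "w < b" using \<open>\<not> w > b\<close> by simp
        then have "D = (a - b) * (a + b) / 2" using ab unfolding D_def Qf_def Tf_def by (simp add: power2_eq_square field_simps)
        moreover have "0 \<le> (a - b) * (a + b)" using ab assms by simp
        ultimately show ?thesis by linarith
      qed
    qed
  next
    case nab: False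
    show ?thesis
    proof (cases "a = b")
      case ab: True
      show ?thesis
      proof (cases "w > b")
        case True
        then have "D = (w - a)^2 / 2" using ab unfolding D_def Qf_def Tf_def by (simp add: power2_eq_square field_simps)
        then show ?thesis using zero_le_power2[of "w - a"] by linarith
      next
        case False
        then have "D = 0 \<or> D = a * (a - w) / 2" using ab unfolding D_def Qf_def Tf_def
          by (auto simp: power2_eq_square field_simps)
        moreover have "0 \<le> a * (a - w)" using False ab assms by simp
        ultimately show ?thesis by linarith
      qed
    next
      case False
      then have ab: "a < b" using nab by simp
      show ?thesis
      proof (cases "w > b")
        case True
        have aw: "a * w \<le> b * w" using ab assms by (intro mult_right_mono) auto
        have "D = (w^2 + b^2) / 2 - a * w" using ab True unfolding D_def Qf_def Tf_def by (simp add: power2_eq_square field_simps)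
        also have "\<dots> \<ge> (w - b)^2 / 2" using aw by (simp add: power2_eq_square field_simps)
        finally show ?thesis using zero_le_power2[of "w - b"] by linarith
      next
        case F2: False
        show ?thesis
        proof (cases "w = b")
          case True
          then have "D = b * (b - a) / 2" using ab unfolding D_def Qf_def Tf_def by (simp add: power2_eq_square field_simps)
          moreover have "0 \<le> b * (b - a)" using ab assms by simp
          ultimately show ?thesis by linarith
        next
          case False
          then have "D = 0" using ab F2 unfolding D_def Qf_def Tf_def by simp
          then show ?thesis by simp
        qed
      qed
    qed
  qed
  then show "a * Qf a b - Tf a b \<ge> a * Qf w b - Tf w b" unfolding D_def by simp
qed

lemma qstar_tstar_mech: "DSIC_EPIR_mechanism qstar tstar"
  unfolding DSIC_EPIR_mechanism_def feasible_def DSIC_def EPIR_def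
proof (intro conjI ballI)
  fix v1 v2 :: real assume v: "v1 \<in> {0..1}" "v2 \<in> {0..1}"
  show "0 \<le> fst (qstar (v1, v2))" "0 \<le> snd (qstar (v1, v2))" "fst (qstar (v1, v2)) + snd (qstar (v1, v2)) \<le> 1"
    using v by (auto simp: qstar_def Let_def)
  show "0 \<le> v1 * fst (qstar (v1, v2)) - fst (tstar (v1, v2))"
    unfolding qstar_fst tstar_fst using phi_ic(2)[of v1 v2] v by auto
  show "0 \<le> v2 * snd (qstar (v1, v2)) - snd (tstar (v1, v2))"
    unfolding qstar_snd tstar_snd using phi_ic(2)[of v2 v1] v by auto
  fix w :: real assume w: "w \<in> {0..1}"
  show "v1 * fst (qstar (w, v2)) - fst (tstar (w, v2)) \<le> v1 * fst (qstar (v1, v2)) - fst (tstar (v1, v2))"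
    unfolding qstar_fst tstar_fst using phi_ic(1)[of v1 v2 w] v w by auto
  show "v2 * snd (qstar (v1, w)) - snd (tstar (v1, w)) \<le> v2 * snd (qstar (v1, v2)) - snd (tstar (v1, v2))"
    unfolding qstar_snd tstar_snd using phi_ic(1)[of v2 v1 w] v w by auto
qed

lemma tstar_sum: "fst (tstar v) + snd (tstar v) = ((fst v)^2 + (snd v)^2) / 2"
  by (auto simp: tstar_def Let_def)

context setting begin

interpretation Fp: prob_space F by (rule F_prob)

lemma AE_F01: "AE x in F. x \<in> {0..1}"
proof (rule AE_I')
  show "- {0..1} \<in> null_sets F" using F_supp1 F_sets by (auto simp: null_sets_def)
qed auto

lemma int_sq_F: "integrable F (\<lambda>x. x^2)"
proof (rule Fp.integrable_const_bound[where B=1])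
  show "AE x in F. norm (x^2) \<le> 1"
    using AE_F01 by eventually_elim (auto simp: power_le_one abs_square_le_1)
  show "(\<lambda>x::real. x^2) \<in> borel_measurable F" using F_sets by (simp cong: measurable_cong_sets)
qed

lemma int_sq_F_val: "(\<integral>x. x^2 \<partial>F) = F1 + Ir 1"
proof -
  have m: "(\<lambda>x::real. x^2) \<in> borel_measurable F" using F_sets by (simp cong: measurable_cong_sets)
  have "(\<integral>x. x^2 \<partial>F) = enn2real (\<integral>\<^sup>+ x. ennreal (x^2) \<partial>F)"
    by (rule integral_eq_nn_integral[OF m]) simp
  also have "(\<integral>\<^sup>+ x. ennreal (x^2) \<partial>F) = ennreal F0 * 0 + (\<integral>\<^sup>+ x. ennreal (fz x) * ennreal (x^2) \<partial>lborel) + ennreal F1 * 1"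
    by (subst nn_integral_F) auto
  also have "(\<integral>\<^sup>+ x. ennreal (fz x) * ennreal (x^2) \<partial>lborel) = Jn 1"
    unfolding Jn_def
    by (rule nn_integral_cong) (auto simp: fz_def indicator_def ennreal_mult'[symmetric] mult.commute)
  also have "Jn 1 = ennreal (Ir 1)" using Ir_nn(1)[of 1] by simp
  finally have "(\<integral>x. x^2 \<partial>F) = enn2real (ennreal (Ir 1) + ennreal F1)" by simp
  also have "\<dots> = Ir 1 + F1" using Ir_nn(2)[of 1] by (simp del: ennreal_plus add: ennreal_plus[symmetric])
  finally show ?thesis by simp
qed

lemma revenue_tstar:
  assumes pi: "\<pi> \<in> PiF F"
  shows "revenue tstar \<pi> = (\<integral>x. x^2 \<partial>F)"
proof -
  have sp: "sets \<pi> = sets borel" and d1: "distr \<pi> borel fst = F" and d2: "distr \<pi> borel snd = F"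
    using pi by (auto simp: PiF_def)
  have fm: "fst \<in> measurable \<pi> borel" "snd \<in> measurable \<pi> borel"
    using fst_borel snd_borel sp by (simp_all cong: measurable_cong_sets)
  have i1: "integrable \<pi> (\<lambda>v. (fst v)^2)"
    using integrable_distr_eq[OF fm(1), of "\<lambda>x. x^2"] int_sq_F d1 by simp
  have i2: "integrable \<pi> (\<lambda>v. (snd v)^2)"
    using integrable_distr_eq[OF fm(2), of "\<lambda>x. x^2"] int_sq_F d2 by simp
  have e1: "(\<integral>v. (fst v)^2 \<partial>\<pi>) = (\<integral>x. x^2 \<partial>F)"
    using integral_distr[OF fm(1), of "\<lambda>x. x^2"] d1 by simp
  have e2: "(\<integral>v. (snd v)^2 \<partial>\<pi>) = (\<integral>x. x^2 \<partial>F)"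
    using integral_distr[OF fm(2), of "\<lambda>x. x^2"] d2 by simp
  have "revenue tstar \<pi> = (\<integral>v. ((fst v)^2 + (snd v)^2) / 2 \<partial>\<pi>)"
    unfolding revenue_def tstar_sum ..
  also have "\<dots> = ((\<integral>v. (fst v)^2 \<partial>\<pi>) + (\<integral>v. (snd v)^2 \<partial>\<pi>)) / 2"
    using i1 i2 by simp
  finally show ?thesis using e1 e2 by simp
qed

end

lemma mech_unpack:
  assumes "DSIC_EPIR_mechanism q t"
  shows "\<And>x y. x \<in> {0..1} \<Longrightarrow> y \<in> {0..1} \<Longrightarrow> 0 \<le> fst (q (x, y)) \<and> 0 \<le> snd (q (x, y)) \<and> fst (q (x, y)) + snd (q (x, y)) \<le> 1"
    "\<And>y. y \<in> {0..1} \<Longrightarrow> dsic1 (\<lambda>x. fst (q (x, y))) (\<lambda>x. fst (t (x, y)))"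
    "\<And>x. x \<in> {0..1} \<Longrightarrow> dsic1 (\<lambda>y. snd (q (x, y))) (\<lambda>y. snd (t (x, y)))"
proof -
  have fe: "feasible q" and ds: "DSIC q t" and ep: "EPIR q t"
    using assms unfolding DSIC_EPIR_mechanism_def by auto
  show "\<And>x y. x \<in> {0..1} \<Longrightarrow> y \<in> {0..1} \<Longrightarrow> 0 \<le> fst (q (x, y)) \<and> 0 \<le> snd (q (x, y)) \<and> fst (q (x, y)) + snd (q (x, y)) \<le> 1"
    using fe unfolding feasible_def by auto
  show "\<And>y. y \<in> {0..1} \<Longrightarrow> dsic1 (\<lambda>x. fst (q (x, y))) (\<lambda>x. fst (t (x, y)))"
    unfolding dsic1_def
  proof (intro conjI ballI)
    fix y x w :: real assume "y \<in> {0..1}" "x \<in> {0..1}" "w \<in> {0..1}"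
    then show "x * fst (q (w, y)) - fst (t (w, y)) \<le> x * fst (q (x, y)) - fst (t (x, y))"
      using ds unfolding DSIC_def by blast
  next
    fix y x :: real assume a: "y \<in> {0..1}" "x \<in> {0..1}"
    show "0 \<le> x * fst (q (x, y)) - fst (t (x, y))" using ep a unfolding EPIR_def by blast
    show "0 \<le> fst (q (x, y))" using fe a unfolding feasible_def by blast
    have "0 \<le> snd (q (x, y))" "fst (q (x, y)) + snd (q (x, y)) \<le> 1" using fe a unfolding feasible_def by auto
    then show "fst (q (x, y)) \<le> 1" by simp
  qed
  show "\<And>x. x \<in> {0..1} \<Longrightarrow> dsic1 (\<lambda>y. snd (q (x, y))) (\<lambda>y. snd (t (x, y)))"
    unfolding dsic1_def
  proof (intro conjI ballI)
    fix x y w :: real assume "x \<in> {0..1}" "y \<in> {0..1}" "w \<in> {0..1}"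
    then show "y * snd (q (x, w)) - snd (t (x, w)) \<le> y * snd (q (x, y)) - snd (t (x, y))"
      using ds unfolding DSIC_def by blast
  next
    fix x y :: real assume a: "x \<in> {0..1}" "y \<in> {0..1}"
    show "0 \<le> y * snd (q (x, y)) - snd (t (x, y))" using ep a unfolding EPIR_def by blast
    show "0 \<le> snd (q (x, y))" using fe a unfolding feasible_def by blast
    have "0 \<le> fst (q (x, y))" "fst (q (x, y)) + snd (q (x, y)) \<le> 1" using fe a unfolding feasible_def by auto
    then show "snd (q (x, y)) \<le> 1" by simp
  qed
qed

lemma dsic1_Hle1: "dsic1 Q H \<Longrightarrow> x \<in> {0..1} \<Longrightarrow> H x \<le> Q x \<and> H x \<le> 1"
proof -
  assume d: "dsic1 Q H" and x: "x \<in> {0..1}"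
  have "x * Q x - H x \<ge> 0" "0 \<le> Q x" "Q x \<le> 1" using dsic1_D[OF d x x] by auto
  moreover have "x * Q x \<le> 1 * Q x" using x \<open>0 \<le> Q x\<close> by (intro mult_right_mono) auto
  ultimately show ?thesis by auto
qed

lemma combine_ennreal:
  fixes X F0 Dn Gt c A1 A2 P31 P32 P41 P42 P51 P52 Q1 Q2 C1 C2 :: ennreal
  assumes X: "F0 * 2 + (A1 + A2) + (P31 + P32) + (P41 + P42) + (P51 + P52) \<le> X"
    and I: "Dn + Gt \<le> A1 + P31 + Q2" and II: "Q2 + C2 \<le> P32 + P52"
    and III: "Dn + Gt \<le> A2 + P42 + Q1" and IV: "Q1 + C1 \<le> P41 + P51"
    and V: "c \<le> C1 + C2" and tot: "F0 + Dn + Gt + Gt + c = 1"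
  shows "2 \<le> X + (c + Gt + Gt)"
proof -
  have a: "(Dn + Gt) + C2 \<le> (A1 + P31) + (P32 + P52)"
  proof -
    have "(Dn + Gt) + C2 \<le> (A1 + P31 + Q2) + C2" using I by (rule add_right_mono)
    also have "\<dots> = (A1 + P31) + (Q2 + C2)" by (simp add: ac_simps)
    also have "\<dots> \<le> (A1 + P31) + (P32 + P52)" using II by (rule add_left_mono)
    finally show ?thesis .
  qed
  have b: "(Dn + Gt) + C1 \<le> (A2 + P42) + (P41 + P51)"
  proof -
    have "(Dn + Gt) + C1 \<le> (A2 + P42 + Q1) + C1" using III by (rule add_right_mono)
    also have "\<dots> = (A2 + P42) + (Q1 + C1)" by (simp add: ac_simps)
    also have "\<dots> \<le> (A2 + P42) + (P41 + P51)" using IV by (rule add_left_mono)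
    finally show ?thesis .
  qed
  have "2 = (F0 + Dn + Gt + Gt + c) * 2" using tot by simp
  also have "\<dots> = F0 * 2 + ((Dn + Gt) + (Dn + Gt) + c) + (c + Gt + Gt)"
    by (simp add: algebra_simps mult_2_right)
  also have "\<dots> \<le> F0 * 2 + ((Dn + Gt) + (Dn + Gt) + (C1 + C2)) + (c + Gt + Gt)"
    by (rule add_right_mono[OF add_left_mono[OF add_left_mono[OF V]]])
  also have "\<dots> = F0 * 2 + (((Dn + Gt) + C2) + ((Dn + Gt) + C1)) + (c + Gt + Gt)"
    by (simp add: ac_simps)
  also have "\<dots> \<le> F0 * 2 + (((A1 + P31) + (P32 + P52)) + ((A2 + P42) + (P41 + P51))) + (c + Gt + Gt)"
    by (rule add_right_mono[OF add_left_mono[OF add_mono[OF a b]]])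
  also have "F0 * 2 + (((A1 + P31) + (P32 + P52)) + ((A2 + P42) + (P41 + P51)))
      = F0 * 2 + (A1 + A2) + (P31 + P32) + (P41 + P42) + (P51 + P52)"
    by (simp add: ac_simps)
  also have "\<dots> \<le> X" by (rule X)
  finally show ?thesis by simp
qed

lemma meas_int_x:
  fixes h :: "real \<times> real \<Rightarrow> ennreal"
  assumes "h \<in> borel_measurable (lborel \<Otimes>\<^sub>M lborel)"
  shows "(\<lambda>y. \<integral>\<^sup>+ x. h (x, y) \<partial>lborel) \<in> borel_measurable borel"
proof -
  have "(\<lambda>(y, x). h (x, y)) \<in> borel_measurable (borel \<Otimes>\<^sub>M lborel)"
    using measurable_pair_swap[OF assms] by (simp add: case_prod_beta)
  then show ?thesis by (rule lborel.borel_measurable_nn_integral)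
qed

lemma meas_int_y:
  fixes h :: "real \<times> real \<Rightarrow> ennreal"
  assumes "h \<in> borel_measurable (lborel \<Otimes>\<^sub>M lborel)"
  shows "(\<lambda>x. \<integral>\<^sup>+ y. h (x, y) \<partial>lborel) \<in> borel_measurable borel"
proof -
  have "(\<lambda>(x, y). h (x, y)) \<in> borel_measurable (borel \<Otimes>\<^sub>M lborel)"
    using assms by (simp add: case_prod_beta)
  then show ?thesis by (rule lborel.borel_measurable_nn_integral)
qed

context setting begin

lemma main_ineq:
  assumes mech: "DSIC_EPIR_mechanism q t"
    and Tint: "integrable (pistar F f) (\<lambda>v. fst (t v) + snd (t v))"
  shows "(\<integral>v. fst (t v) + snd (t v) \<partial>pistar F f) \<le> F1 + Ir 1"
proof -
  define P where "P = pistar F f"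
  interpret P: prob_space P unfolding P_def by (rule pistar_prob)
  define T where "T v = fst (t v) + snd (t v)" for v
  have TintP: "integrable P T" using Tint unfolding P_def T_def by simp
  have Tm[measurable]: "T \<in> borel_measurable borel"
    using borel_measurable_integrable[OF TintP] unfolding P_def by (simp cong: measurable_cong_sets)
  note feas = mech_unpack(1)[OF mech]
  note d1 = mech_unpack(2)[OF mech]
  note d2 = mech_unpack(3)[OF mech]
  have m1: "(\<lambda>y. fst (t (c, clmp y))) \<in> borel_measurable borel" if c: "c \<in> {0..1}" for c
  proof -
    have "(\<lambda>y. (c, clmp y)) \<in> measurable borel borel"
      using measurable_compose[OF clmp_meas borel_pair_meas1[of c]] by simp
    from measurable_compose[OF this Tm]
    have "(\<lambda>y. T (c, clmp y) - snd (t (c, clmp y))) \<in> borel_measurable borel"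
      using dsic1_meas(2)[OF d2[OF c]] by (intro borel_measurable_diff) auto
    then show ?thesis by (simp add: T_def)
  qed
  have m2: "(\<lambda>y. snd (t (clmp y, c))) \<in> borel_measurable borel" if c: "c \<in> {0..1}" for c
  proof -
    have "(\<lambda>y. (clmp y, c)) \<in> measurable borel borel"
      using measurable_compose[OF clmp_meas borel_pair_meas2[of c]] by simp
    from measurable_compose[OF this Tm]
    have "(\<lambda>y. T (clmp y, c) - fst (t (clmp y, c))) \<in> borel_measurable borel"
      using dsic1_meas(2)[OF d1[OF c]] by (intro borel_measurable_diff) auto
    then show ?thesis by (simp add: T_def)
  qed
  obtain Hr1 Qr1 where H1m: "(\<lambda>p. Hr1 (fst p) (snd p)) \<in> borel_measurable borel"
    and H1d: "\<And>y. y \<in> {0..1} \<Longrightarrow> dsic1 (\<lambda>x. Qr1 x y) (\<lambda>x. Hr1 x y)"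
    and H1le: "\<And>x y. x \<in> {0..1} \<Longrightarrow> y \<in> {0..1} \<Longrightarrow> fst (t (x, y)) \<le> Hr1 x y"
    and H1one: "\<And>y. y \<in> {0..1} \<Longrightarrow> Hr1 1 y = fst (t (1, y)) \<and> Qr1 1 y = fst (q (1, y))"
    by (rule regularize[of "\<lambda>x y. fst (q (x, y))" "\<lambda>x y. fst (t (x, y))", OF d1 m1]; (assumption | rule that))
  obtain Hr2 Qr2 where H2m: "(\<lambda>p. Hr2 (fst p) (snd p)) \<in> borel_measurable borel"
    and H2d: "\<And>y. y \<in> {0..1} \<Longrightarrow> dsic1 (\<lambda>x. Qr2 x y) (\<lambda>x. Hr2 x y)"
    and H2le': "\<And>x y. x \<in> {0..1} \<Longrightarrow> y \<in> {0..1} \<Longrightarrow> snd (t (y, x)) \<le> Hr2 x y"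
    and H2one: "\<And>y. y \<in> {0..1} \<Longrightarrow> Hr2 1 y = snd (t (y, 1)) \<and> Qr2 1 y = snd (q (y, 1))"
    by (rule regularize[of "\<lambda>y x. snd (q (x, y))" "\<lambda>y x. snd (t (x, y))", OF d2 m2]; (assumption | rule that))
  have H2le: "\<And>x y. x \<in> {0..1} \<Longrightarrow> y \<in> {0..1} \<Longrightarrow> snd (t (x, y)) \<le> Hr2 y x"
    using H2le' by blast
  have h1m[measurable]: "(\<lambda>p. Hr1 (fst p) (snd p)) \<in> borel_measurable (lborel \<Otimes>\<^sub>M lborel)"
    using H1m by (simp add: lborel_prod)
  have h2m[measurable]: "(\<lambda>p. Hr2 (snd p) (fst p)) \<in> borel_measurable (lborel \<Otimes>\<^sub>M lborel)"
  proof -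
    have "(\<lambda>p. Hr2 (fst p) (snd p)) \<in> borel_measurable (lborel \<Otimes>\<^sub>M lborel)"
      using H2m by (simp add: lborel_prod)
    from measurable_pair_swap[OF this] show ?thesis by simp
  qed
  have tle1: "fst (t (x, y)) \<le> fst (q (x, y)) \<and> fst (t (x, y)) \<le> 1" if "x \<in> {0..1}" "y \<in> {0..1}" for x y
    using dsic1_Hle1[OF d1[OF that(2)] that(1)] by simp
  have tle2: "snd (t (x, y)) \<le> snd (q (x, y)) \<and> snd (t (x, y)) \<le> 1" if "x \<in> {0..1}" "y \<in> {0..1}" for x y
    using dsic1_Hle1[OF d2[OF that(1)] that(2)] by simp
  have h1le: "Hr1 x y \<le> 1" if "x \<in> {0..1}" "y \<in> {0..1}" for x y
    using dsic1_Hle1[OF H1d[OF that(2)] that(1)] by simp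
  have h2le: "Hr2 y x \<le> 1" if "x \<in> {0..1}" "y \<in> {0..1}" for x y
    using dsic1_Hle1[OF H2d[OF that(1)] that(2)] by simp
  have one: "(1::real) \<in> {0..1}" and zero: "(0::real) \<in> {0..1}" by auto
  have mt1r[measurable]: "(\<lambda>y. fst (t (1, clmp y))) \<in> borel_measurable borel" by (rule m1[OF one])
  have mt2r[measurable]: "(\<lambda>y. snd (t (1, clmp y))) \<in> borel_measurable borel" by (rule dsic1_meas(2)[OF d2[OF one]])
  have mq2r[measurable]: "(\<lambda>y. snd (q (1, clmp y))) \<in> borel_measurable borel" by (rule dsic1_meas(1)[OF d2[OF one]])
  have mt1c[measurable]: "(\<lambda>x. fst (t (clmp x, 1))) \<in> borel_measurable borel" by (rule dsic1_meas(2)[OF d1[OF one]])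
  have mt2c[measurable]: "(\<lambda>x. snd (t (clmp x, 1))) \<in> borel_measurable borel" by (rule m2[OF one])
  have mq1c[measurable]: "(\<lambda>x. fst (q (clmp x, 1))) \<in> borel_measurable borel" by (rule dsic1_meas(1)[OF d1[OF one]])
  have mA1: "(\<lambda>v. ennreal (dens v) * ennreal (1 - Hr1 (fst v) (snd v))) \<in> borel_measurable (lborel \<Otimes>\<^sub>M lborel)"
    by measurable
  have mA2: "(\<lambda>v. ennreal (dens v) * ennreal (1 - Hr2 (snd v) (fst v))) \<in> borel_measurable (lborel \<Otimes>\<^sub>M lborel)"
    by measurable
  have mA1': "(\<lambda>v. ennreal (dens v) * ennreal (1 - Hr1 (fst v) (snd v))) \<in> borel_measurable lborel"
    using mA1 by (simp add: lborel_prod)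
  have mA2': "(\<lambda>v. ennreal (dens v) * ennreal (1 - Hr2 (snd v) (fst v))) \<in> borel_measurable lborel"
    using mA2 by (simp add: lborel_prod)
  define X where "X = (\<integral>\<^sup>+ v. ennreal (2 - T v) \<partial>P)"
  define Dn where "Dn = (\<integral>\<^sup>+ v. ennreal (dens v) \<partial>(lborel :: (real \<times> real) measure))"
  define Gt where "Gt = ennreal (Ir 1)"
  define A1 where "A1 = (\<integral>\<^sup>+ y. (\<integral>\<^sup>+ x. ennreal (dens (x, y)) * ennreal (1 - Hr1 x y) \<partial>lborel) \<partial>lborel)"
  define A2 where "A2 = (\<integral>\<^sup>+ x. (\<integral>\<^sup>+ y. ennreal (dens (x, y)) * ennreal (1 - Hr2 y x) \<partial>lborel) \<partial>lborel)"
  define P31 where "P31 = (\<integral>\<^sup>+ y. ennreal (gz y) * ennreal (1 - fst (t (1, clmp y))) \<partial>lborel)"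
  define P32 where "P32 = (\<integral>\<^sup>+ y. ennreal (gz y) * ennreal (1 - snd (t (1, clmp y))) \<partial>lborel)"
  define P41 where "P41 = (\<integral>\<^sup>+ x. ennreal (gz x) * ennreal (1 - fst (t (clmp x, 1))) \<partial>lborel)"
  define P42 where "P42 = (\<integral>\<^sup>+ x. ennreal (gz x) * ennreal (1 - snd (t (clmp x, 1))) \<partial>lborel)"
  define P51 where "P51 = ennreal c5 * ennreal (1 - fst (t (1, 1)))"
  define P52 where "P52 = ennreal c5 * ennreal (1 - snd (t (1, 1)))"
  define Q1 where "Q1 = (\<integral>\<^sup>+ x. ennreal (gz x) * ennreal (1 - fst (q (clmp x, 1))) \<partial>lborel)"
  define Q2 where "Q2 = (\<integral>\<^sup>+ y. ennreal (gz y) * ennreal (1 - snd (q (1, clmp y))) \<partial>lborel)"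
  define C1 where "C1 = ennreal c5 * ennreal (1 - fst (q (1, 1)))"
  define C2 where "C2 = ennreal c5 * ennreal (1 - snd (q (1, 1)))"
  have Xeq: "X = ennreal F0 * ennreal (2 - T (0, 0)) + (\<integral>\<^sup>+ v. ennreal (dens v) * ennreal (2 - T v) \<partial>lborel)
      + (\<integral>\<^sup>+ y. ennreal (gz y) * ennreal (2 - T (1, y)) \<partial>lborel) + (\<integral>\<^sup>+ x. ennreal (gz x) * ennreal (2 - T (x, 1)) \<partial>lborel)
      + ennreal c5 * ennreal (2 - T (1, 1))"
    unfolding X_def P_def by (rule nn_integral_pistar) measurable
  have B1: "ennreal F0 * 2 \<le> ennreal F0 * ennreal (2 - T (0, 0))"
  proof -
    have "fst (t (0, 0)) \<le> 0" using dsic1_D(2)[OF d1[OF zero] zero zero] by simp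
    moreover have "snd (t (0, 0)) \<le> 0" using dsic1_D(2)[OF d2[OF zero] zero zero] by simp
    ultimately have "2 \<le> 2 - T (0, 0)" by (simp add: T_def)
    then have "(2::ennreal) \<le> ennreal (2 - T (0, 0))" by (metis ennreal_leI ennreal_numeral)
    then show ?thesis by (rule mult_left_mono) simp
  qed
  have B2: "A1 + A2 \<le> (\<integral>\<^sup>+ v. ennreal (dens v) * ennreal (2 - T v) \<partial>lborel)"
  proof -
    have "A1 = (\<integral>\<^sup>+ v. ennreal (dens v) * ennreal (1 - Hr1 (fst v) (snd v)) \<partial>lborel)"
      unfolding A1_def using tonelli2[OF mA1] by simp
    moreover have "A2 = (\<integral>\<^sup>+ v. ennreal (dens v) * ennreal (1 - Hr2 (snd v) (fst v)) \<partial>lborel)"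
      unfolding A2_def using tonelli1[OF mA2] by simp
    ultimately have "A1 + A2 = (\<integral>\<^sup>+ v. ennreal (dens v) * ennreal (1 - Hr1 (fst v) (snd v))
        + ennreal (dens v) * ennreal (1 - Hr2 (snd v) (fst v)) \<partial>lborel)"
      using nn_integral_add[OF mA1' mA2'] by simp
    also have "\<dots> \<le> (\<integral>\<^sup>+ v. ennreal (dens v) * ennreal (2 - T v) \<partial>lborel)"
    proof (rule nn_integral_mono)
      fix v :: "real \<times> real"
      obtain x y where v: "v = (x, y)" by (cases v)
      show "ennreal (dens v) * ennreal (1 - Hr1 (fst v) (snd v)) + ennreal (dens v) * ennreal (1 - Hr2 (snd v) (fst v))
          \<le> ennreal (dens v) * ennreal (2 - T v)"
      proof (cases "x \<in> {0<..<1} \<and> y \<in> {0<..<1}")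
        case True
        then have xy: "x \<in> {0..1}" "y \<in> {0..1}" by auto
        have a1: "0 \<le> 1 - Hr1 x y" using h1le[OF xy] by simp
        have a2: "0 \<le> 1 - Hr2 y x" using h2le[OF xy] by simp
        have "(1 - Hr1 x y) + (1 - Hr2 y x) \<le> 2 - T (x, y)"
          using H1le[OF xy] H2le[OF xy] by (simp add: T_def)
        then have "ennreal (1 - Hr1 x y) + ennreal (1 - Hr2 y x) \<le> ennreal (2 - T (x, y))"
          using a1 a2 by (simp add: ennreal_plus[symmetric] del: ennreal_plus)
        then have "ennreal (dens v) * (ennreal (1 - Hr1 x y) + ennreal (1 - Hr2 y x)) \<le> ennreal (dens v) * ennreal (2 - T (x, y))"
          by (rule mult_left_mono) simp
        then show ?thesis unfolding v by (simp add: distrib_left)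
      next
        case False
        then show ?thesis unfolding v using dens_zero[OF False] by simp
      qed
    qed
    finally show ?thesis .
  qed
  have B3: "(\<integral>\<^sup>+ y. ennreal (gz y) * ennreal (2 - T (1, y)) \<partial>lborel) = P31 + P32"
  proof -
    have "(\<integral>\<^sup>+ y. ennreal (gz y) * ennreal (2 - T (1, y)) \<partial>lborel)
        = (\<integral>\<^sup>+ y. ennreal (gz y) * ennreal (1 - fst (t (1, clmp y))) + ennreal (gz y) * ennreal (1 - snd (t (1, clmp y))) \<partial>lborel)"
    proof (rule nn_integral_cong)
      fix y :: real
      show "ennreal (gz y) * ennreal (2 - T (1, y))
          = ennreal (gz y) * ennreal (1 - fst (t (1, clmp y))) + ennreal (gz y) * ennreal (1 - snd (t (1, clmp y)))"
      proof (cases "y \<in> {0<..<1}")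
        case True
        then have y: "y \<in> {0..1}" by auto
        have a1: "0 \<le> 1 - fst (t (1, y))" using tle1[OF one y] by simp
        have a2: "0 \<le> 1 - snd (t (1, y))" using tle2[OF one y] by simp
        have "ennreal (2 - T (1, y)) = ennreal (1 - fst (t (1, y))) + ennreal (1 - snd (t (1, y)))"
          using a1 a2 by (simp add: T_def ennreal_plus[symmetric] del: ennreal_plus)
        then show ?thesis using y by (simp add: distrib_left)
      qed (simp add: gz_zero)
    qed
    also have "\<dots> = P31 + P32" unfolding P31_def P32_def by (rule nn_integral_add) measurable
    finally show ?thesis .
  qed
  have B4: "(\<integral>\<^sup>+ x. ennreal (gz x) * ennreal (2 - T (x, 1)) \<partial>lborel) = P41 + P42"
  proof -
    have "(\<integral>\<^sup>+ x. ennreal (gz x) * ennreal (2 - T (x, 1)) \<partial>lborel)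
        = (\<integral>\<^sup>+ x. ennreal (gz x) * ennreal (1 - fst (t (clmp x, 1))) + ennreal (gz x) * ennreal (1 - snd (t (clmp x, 1))) \<partial>lborel)"
    proof (rule nn_integral_cong)
      fix x :: real
      show "ennreal (gz x) * ennreal (2 - T (x, 1))
          = ennreal (gz x) * ennreal (1 - fst (t (clmp x, 1))) + ennreal (gz x) * ennreal (1 - snd (t (clmp x, 1)))"
      proof (cases "x \<in> {0<..<1}")
        case True
        then have x: "x \<in> {0..1}" by auto
        have a1: "0 \<le> 1 - fst (t (x, 1))" using tle1[OF x one] by simp
        have a2: "0 \<le> 1 - snd (t (x, 1))" using tle2[OF x one] by simp
        have "ennreal (2 - T (x, 1)) = ennreal (1 - fst (t (x, 1))) + ennreal (1 - snd (t (x, 1)))"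
          using a1 a2 by (simp add: T_def ennreal_plus[symmetric] del: ennreal_plus)
        then show ?thesis using x by (simp add: distrib_left)
      qed (simp add: gz_zero)
    qed
    also have "\<dots> = P41 + P42" unfolding P41_def P42_def by (rule nn_integral_add) measurable
    finally show ?thesis .
  qed
  have B5: "ennreal c5 * ennreal (2 - T (1, 1)) = P51 + P52"
  proof -
    have a1: "0 \<le> 1 - fst (t (1, 1))" using tle1[OF one one] by simp
    have a2: "0 \<le> 1 - snd (t (1, 1))" using tle2[OF one one] by simp
    have "ennreal (2 - T (1, 1)) = ennreal (1 - fst (t (1, 1))) + ennreal (1 - snd (t (1, 1)))"
      using a1 a2 by (simp add: T_def ennreal_plus[symmetric] del: ennreal_plus)
    then show ?thesis unfolding P51_def P52_def by (simp add: distrib_left)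
  qed
  have Xge: "ennreal F0 * 2 + (A1 + A2) + (P31 + P32) + (P41 + P42) + (P51 + P52) \<le> X"
    unfolding Xeq B3 B4 B5[symmetric] using B1 B2 by (intro add_mono order_refl)
  have S1: "(\<integral>\<^sup>+ x. ennreal (dens (x, y)) \<partial>lborel) + ennreal (gz y)
      \<le> (\<integral>\<^sup>+ x. ennreal (dens (x, y)) * ennreal (1 - Hr1 x y) \<partial>lborel)
         + ennreal (gz y) * ennreal (1 - fst (t (1, clmp y))) + ennreal (gz y) * ennreal (1 - snd (q (1, clmp y)))" for y
  proof (cases "y \<in> {0<..<1}")
    case True
    then have y: "y \<in> {0..1}" by auto
    have sl: "(\<integral>\<^sup>+ x. ennreal (dens (x, y)) * indicator {0<..<1} x \<partial>lborel) + ennreal (gz y)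
      \<le> (\<integral>\<^sup>+ x. ennreal (dens (x, y)) * ennreal (1 - Hr1 x y) * indicator {0<..<1} x \<partial>lborel)
         + ennreal (gz y) * ennreal (1 - Hr1 1 y) + ennreal (gz y) * ennreal (Qr1 1 y)"
      by (rule slice[OF H1d[OF y]]) (auto simp: dens_nonneg gz_nonneg intro: dens_cond[OF True])
    have e1: "(\<integral>\<^sup>+ x. ennreal (dens (x, y)) * indicator {0<..<1} x \<partial>lborel) = (\<integral>\<^sup>+ x. ennreal (dens (x, y)) \<partial>lborel)"
      by (rule nn_integral_cong) (auto simp: indicator_def dens_zero)
    have e2: "(\<integral>\<^sup>+ x. ennreal (dens (x, y)) * ennreal (1 - Hr1 x y) * indicator {0<..<1} x \<partial>lborel)
        = (\<integral>\<^sup>+ x. ennreal (dens (x, y)) * ennreal (1 - Hr1 x y) \<partial>lborel)"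
      by (rule nn_integral_cong) (auto simp: indicator_def dens_zero)
    have e3: "Hr1 1 y = fst (t (1, clmp y))" using H1one[OF y] y by simp
    have "Qr1 1 y \<le> 1 - snd (q (1, clmp y))" using H1one[OF y] feas[OF one y] y by simp
    then have "ennreal (gz y) * ennreal (Qr1 1 y) \<le> ennreal (gz y) * ennreal (1 - snd (q (1, clmp y)))"
      by (intro mult_left_mono ennreal_leI) auto
    then show ?thesis using sl unfolding e1 e2 e3 by (meson add_left_mono order_trans)
  next
    case False
    then show ?thesis by (simp add: col_zero gz_zero)
  qed
  have S2: "(\<integral>\<^sup>+ y. ennreal (dens (x, y)) \<partial>lborel) + ennreal (gz x)
      \<le> (\<integral>\<^sup>+ y. ennreal (dens (x, y)) * ennreal (1 - Hr2 y x) \<partial>lborel)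
         + ennreal (gz x) * ennreal (1 - snd (t (clmp x, 1))) + ennreal (gz x) * ennreal (1 - fst (q (clmp x, 1)))" for x
  proof (cases "x \<in> {0<..<1}")
    case True
    then have x: "x \<in> {0..1}" by auto
    have cond: "ennreal (s * dens (x, s)) \<le> (\<integral>\<^sup>+ y. ennreal (dens (x, y)) * indicator {s..<1} y \<partial>lborel) + ennreal (gz x)"
      if s: "s \<in> {0<..<1}" for s
    proof -
      have "(\<integral>\<^sup>+ y. ennreal (dens (y, x)) * indicator {s..<1} y \<partial>lborel) = (\<integral>\<^sup>+ y. ennreal (dens (x, y)) * indicator {s..<1} y \<partial>lborel)"
        by (rule nn_integral_cong) (simp only: dens_sym)
      then show ?thesis using dens_cond[OF True s] by (simp add: dens_sym)
    qed
    have sl: "(\<integral>\<^sup>+ y. ennreal (dens (x, y)) * indicator {0<..<1} y \<partial>lborel) + ennreal (gz x)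
      \<le> (\<integral>\<^sup>+ y. ennreal (dens (x, y)) * ennreal (1 - Hr2 y x) * indicator {0<..<1} y \<partial>lborel)
         + ennreal (gz x) * ennreal (1 - Hr2 1 x) + ennreal (gz x) * ennreal (Qr2 1 x)"
      by (rule slice[OF H2d[OF x]]) (auto simp: dens_nonneg gz_nonneg intro: cond)
    have e1: "(\<integral>\<^sup>+ y. ennreal (dens (x, y)) * indicator {0<..<1} y \<partial>lborel) = (\<integral>\<^sup>+ y. ennreal (dens (x, y)) \<partial>lborel)"
      by (rule nn_integral_cong) (auto simp: indicator_def dens_zero)
    have e2: "(\<integral>\<^sup>+ y. ennreal (dens (x, y)) * ennreal (1 - Hr2 y x) * indicator {0<..<1} y \<partial>lborel)
        = (\<integral>\<^sup>+ y. ennreal (dens (x, y)) * ennreal (1 - Hr2 y x) \<partial>lborel)"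
      by (rule nn_integral_cong) (auto simp: indicator_def dens_zero)
    have e3: "Hr2 1 x = snd (t (clmp x, 1))" using H2one[OF x] x by simp
    have "Qr2 1 x \<le> 1 - fst (q (clmp x, 1))" using H2one[OF x] feas[OF x one] x by simp
    then have "ennreal (gz x) * ennreal (Qr2 1 x) \<le> ennreal (gz x) * ennreal (1 - fst (q (clmp x, 1)))"
      by (intro mult_left_mono ennreal_leI) auto
    then show ?thesis using sl unfolding e1 e2 e3 by (meson add_left_mono order_trans)
  next
    case False
    then show ?thesis by (simp add: row_zero gz_zero)
  qed
  have I: "Dn + Gt \<le> A1 + P31 + Q2"
  proof -
    have mi: "(\<lambda>y. \<integral>\<^sup>+ x. ennreal (dens (x, y)) \<partial>lborel) \<in> borel_measurable borel"
      by (rule meas_int_x) measurable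
    have mi2: "(\<lambda>y. \<integral>\<^sup>+ x. ennreal (dens (x, y)) * ennreal (1 - Hr1 x y) \<partial>lborel) \<in> borel_measurable borel"
      using meas_int_x[OF mA1] by simp
    have "Dn + Gt = (\<integral>\<^sup>+ y. (\<integral>\<^sup>+ x. ennreal (dens (x, y)) \<partial>lborel) \<partial>lborel) + (\<integral>\<^sup>+ y. ennreal (gz y) \<partial>lborel)"
      unfolding Dn_def Gt_def G1[symmetric] using tonelli2[of "\<lambda>v. ennreal (dens v)"] by simp
    also have "\<dots> = (\<integral>\<^sup>+ y. (\<integral>\<^sup>+ x. ennreal (dens (x, y)) \<partial>lborel) + ennreal (gz y) \<partial>lborel)"
      using mi by (intro nn_integral_add[symmetric]) auto
    also have "\<dots> \<le> (\<integral>\<^sup>+ y. (\<integral>\<^sup>+ x. ennreal (dens (x, y)) * ennreal (1 - Hr1 x y) \<partial>lborel)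
         + ennreal (gz y) * ennreal (1 - fst (t (1, clmp y))) + ennreal (gz y) * ennreal (1 - snd (q (1, clmp y))) \<partial>lborel)"
      by (rule nn_integral_mono) (rule S1)
    also have "\<dots> = A1 + P31 + Q2"
      unfolding A1_def P31_def Q2_def using mi2
      by (simp add: nn_integral_add)
    finally show ?thesis .
  qed
  have III: "Dn + Gt \<le> A2 + P42 + Q1"
  proof -
    have mi: "(\<lambda>x. \<integral>\<^sup>+ y. ennreal (dens (x, y)) \<partial>lborel) \<in> borel_measurable borel"
      by (rule meas_int_y) measurable
    have mi2: "(\<lambda>x. \<integral>\<^sup>+ y. ennreal (dens (x, y)) * ennreal (1 - Hr2 y x) \<partial>lborel) \<in> borel_measurable borel"
      using meas_int_y[OF mA2] by simp
    have "Dn + Gt = (\<integral>\<^sup>+ x. (\<integral>\<^sup>+ y. ennreal (dens (x, y)) \<partial>lborel) \<partial>lborel) + (\<integral>\<^sup>+ x. ennreal (gz x) \<partial>lborel)"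
      unfolding Dn_def Gt_def G1[symmetric] using tonelli1[of "\<lambda>v. ennreal (dens v)"] by simp
    also have "\<dots> = (\<integral>\<^sup>+ x. (\<integral>\<^sup>+ y. ennreal (dens (x, y)) \<partial>lborel) + ennreal (gz x) \<partial>lborel)"
      using mi by (intro nn_integral_add[symmetric]) auto
    also have "\<dots> \<le> (\<integral>\<^sup>+ x. (\<integral>\<^sup>+ y. ennreal (dens (x, y)) * ennreal (1 - Hr2 y x) \<partial>lborel)
         + ennreal (gz x) * ennreal (1 - snd (t (clmp x, 1))) + ennreal (gz x) * ennreal (1 - fst (q (clmp x, 1))) \<partial>lborel)"
      by (rule nn_integral_mono) (rule S2)
    also have "\<dots> = A2 + P42 + Q1"
      unfolding A2_def P42_def Q1_def using mi2
      by (simp add: nn_integral_add)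
    finally show ?thesis .
  qed
  have II: "Q2 + C2 \<le> P32 + P52"
  proof (rule add_mono)
    show "Q2 \<le> P32" unfolding Q2_def P32_def
    proof (rule nn_integral_mono)
      fix y :: real
      have "snd (t (1, clmp y)) \<le> snd (q (1, clmp y))" using tle2[OF one clmp_range] by simp
      then show "ennreal (gz y) * ennreal (1 - snd (q (1, clmp y))) \<le> ennreal (gz y) * ennreal (1 - snd (t (1, clmp y)))"
        by (intro mult_left_mono ennreal_leI) auto
    qed
    have "snd (t (1, 1)) \<le> snd (q (1, 1))" using tle2[OF one one] by simp
    then show "C2 \<le> P52" unfolding C2_def P52_def by (intro mult_left_mono ennreal_leI) auto
  qed
  have IV: "Q1 + C1 \<le> P41 + P51"
  proof (rule add_mono)
    show "Q1 \<le> P41" unfolding Q1_def P41_def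
    proof (rule nn_integral_mono)
      fix x :: real
      have "fst (t (clmp x, 1)) \<le> fst (q (clmp x, 1))" using tle1[OF clmp_range one] by simp
      then show "ennreal (gz x) * ennreal (1 - fst (q (clmp x, 1))) \<le> ennreal (gz x) * ennreal (1 - fst (t (clmp x, 1)))"
        by (intro mult_left_mono ennreal_leI) auto
    qed
    have "fst (t (1, 1)) \<le> fst (q (1, 1))" using tle1[OF one one] by simp
    then show "C1 \<le> P51" unfolding C1_def P51_def by (intro mult_left_mono ennreal_leI) auto
  qed
  have V: "ennreal c5 \<le> C1 + C2"
  proof -
    have fq: "0 \<le> fst (q (1, 1))" "0 \<le> snd (q (1, 1))" "fst (q (1, 1)) + snd (q (1, 1)) \<le> 1"
      using feas[OF one one] by auto
    have "ennreal 1 \<le> ennreal ((1 - fst (q (1, 1))) + (1 - snd (q (1, 1))))" using fq by (intro ennreal_leI) auto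
    also have "\<dots> = ennreal (1 - fst (q (1, 1))) + ennreal (1 - snd (q (1, 1)))"
      using fq by (intro ennreal_plus) auto
    finally have "ennreal c5 * 1 \<le> ennreal c5 * (ennreal (1 - fst (q (1, 1))) + ennreal (1 - snd (q (1, 1))))"
      by (intro mult_left_mono) auto
    then show ?thesis unfolding C1_def C2_def by (simp add: distrib_left)
  qed
  have tot: "ennreal F0 + Dn + Gt + Gt + ennreal c5 = 1"
  proof -
    have "(\<integral>\<^sup>+ v. 1 \<partial>P) = ennreal F0 * 1 + (\<integral>\<^sup>+ v. ennreal (dens v) * 1 \<partial>lborel)
      + (\<integral>\<^sup>+ y. ennreal (gz y) * 1 \<partial>lborel) + (\<integral>\<^sup>+ x. ennreal (gz x) * 1 \<partial>lborel) + ennreal c5 * 1"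
      unfolding P_def by (rule nn_integral_pistar) simp
    moreover have "(\<integral>\<^sup>+ v. 1 \<partial>P) = 1" using P.emeasure_space_1 by simp
    ultimately show ?thesis unfolding Dn_def Gt_def G1[symmetric] by simp
  qed
  have key: "2 \<le> X + (ennreal c5 + Gt + Gt)"
    by (rule combine_ennreal[OF Xge I II III IV V tot])
  have AEsq: "AE v in P. fst v \<in> {0..1} \<and> snd v \<in> {0..1}"
  proof -
    have s1: "fst -` (- {0..1::real}) \<in> sets (borel :: (real \<times> real) measure)"
      using measurable_sets[OF fst_borel, of "- {0..1}"] by simp
    have s2: "snd -` (- {0..1::real}) \<in> sets (borel :: (real \<times> real) measure)"
      using measurable_sets[OF snd_borel, of "- {0..1}"] by simp
    have n1: "fst -` (- {0..1}) \<in> null_sets P"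
      using pistar_fst[of "- {0..1}"] F_supp1 s1 unfolding P_def
      by (auto simp: null_sets_def)
    have n2: "snd -` (- {0..1}) \<in> null_sets P"
      using pistar_snd[of "- {0..1}"] F_supp1 s2 unfolding P_def
      by (auto simp: null_sets_def)
    have "AE v in P. fst v \<in> {0..1}" by (rule AE_I'[OF n1]) auto
    moreover have "AE v in P. snd v \<in> {0..1}" by (rule AE_I'[OF n2]) auto
    ultimately show ?thesis by eventually_elim auto
  qed
  have AEnn: "AE v in P. 0 \<le> 2 - T v"
    using AEsq
  proof eventually_elim
    case (elim v)
    obtain x y where v: "v = (x, y)" by (cases v)
    then show ?case using tle1[of x y] tle2[of x y] elim by (simp add: T_def)
  qed
  have int2: "integrable P (\<lambda>v. 2 - T v)" using TintP by simp
  have Xfin: "X = ennreal (\<integral>v. 2 - T v \<partial>P)"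
    unfolding X_def by (rule nn_integral_eq_integral[OF int2 AEnn])
  have "(\<integral>v. 2 - T v \<partial>P) = 2 - (\<integral>v. T v \<partial>P)"
    using TintP by (simp add: P.prob_space)
  moreover have "ennreal c5 + Gt + Gt = ennreal (F1 + Ir 1)"
  proof -
    have "0 \<le> Ir 1" using Ir_nn(2)[of 1] by simp
    then show ?thesis unfolding Gt_def c5_def using c5_nonneg[unfolded c5_def]
      by (simp add: ennreal_plus[symmetric] del: ennreal_plus)
  qed
  ultimately have "ennreal 2 \<le> ennreal (2 - (\<integral>v. T v \<partial>P)) + ennreal (F1 + Ir 1)"
    using key Xfin by simp
  moreover have "0 \<le> 2 - (\<integral>v. T v \<partial>P)"
    using integral_nonneg_AE[OF AEnn] \<open>(\<integral>v. 2 - T v \<partial>P) = 2 - (\<integral>v. T v \<partial>P)\<close> by simp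
  moreover have "0 \<le> F1 + Ir 1" using Ir_nn(2)[of 1] by simp
  ultimately have "2 \<le> 2 - (\<integral>v. T v \<partial>P) + (F1 + Ir 1)"
    by (simp add: ennreal_plus[symmetric] del: ennreal_plus)
  then show ?thesis unfolding P_def T_def by simp
qed


end

theorem theorem1:
  fixes F :: "real measure" and f :: "real \<Rightarrow> real"
  assumes F_prob: "prob_space F"
    and F_sets: "sets F = sets borel"
    and F_supp1: "emeasure F (- {0..1}) = 0"
    and F_supp2: "\<forall>x\<in>{0..1}. \<forall>e>0. emeasure F (ball x e) > 0"
    and f_meas: "set_borel_measurable lborel {0<..<1} f"
    and f_nonneg: "\<forall>x\<in>{0<..<1}. 0 \<le> f x"
    and F_dens: "\<forall>A\<in>sets borel.
         emeasure F (A \<inter> {0<..<1}) = (\<integral>\<^sup>+ x\<in>A \<inter> {0<..<1}. ennreal (f x) \<partial>lborel)"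
    and reg1: "mono_on {0<..<1} (\<lambda>x. x^2 * f x)"
    and reg2: "measure F {1} \<ge> (LINT x:{0<..<1}|lborel. x^2 * f x)"
  shows "pistar F f \<in> PiF F
    \<and> DSIC_EPIR_mechanism qstar tstar
    \<and> (\<forall>\<pi>\<in>PiF F. revenue tstar \<pi> \<ge> revenue tstar (pistar F f))
    \<and> (\<forall>q t. DSIC_EPIR_mechanism q t \<longrightarrow> revenue tstar (pistar F f) \<ge> revenue t (pistar F f))
    \<and> (INF \<pi>\<in>PiF F. revenue tstar \<pi>) = (\<integral>x. x^2 \<partial>F)"
proof -
  interpret S: setting F f
    by (rule setting.intro[OF F_prob F_sets F_supp1 f_meas f_nonneg F_dens reg1 reg2])
  have pi: "pistar F f \<in> PiF F" by (rule S.pistar_PiF)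
  have rev: "revenue tstar (pistar F f) = (\<integral>x. x^2 \<partial>F)" by (rule S.revenue_tstar[OF pi])
  have val: "(\<integral>x. x^2 \<partial>F) = measure F {1} + S.Ir 1" by (rule S.int_sq_F_val)
  have part3: "\<forall>\<pi>\<in>PiF F. revenue tstar \<pi> \<ge> revenue tstar (pistar F f)"
    using S.revenue_tstar rev by simp
  have part4: "\<forall>q t. DSIC_EPIR_mechanism q t \<longrightarrow> revenue tstar (pistar F f) \<ge> revenue t (pistar F f)"
  proof (intro allI impI)
    fix q t assume mech: "DSIC_EPIR_mechanism q t"
    show "revenue t (pistar F f) \<le> revenue tstar (pistar F f)"
    proof (cases "integrable (pistar F f) (\<lambda>v. fst (t v) + snd (t v))")
      case True
      show ?thesis unfolding rev val revenue_def[of t] by (rule S.main_ineq[OF mech True])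
    next
      case False
      then have "revenue t (pistar F f) = 0" unfolding revenue_def by (rule not_integrable_integral_eq)
      moreover have "0 \<le> measure F {1} + S.Ir 1" using S.Ir_nn(2)[of 1] by simp
      ultimately show ?thesis unfolding rev val by simp
    qed
  qed
  have part5: "(INF \<pi>\<in>PiF F. revenue tstar \<pi>) = (\<integral>x. x^2 \<partial>F)"
  proof -
    have "(INF \<pi>\<in>PiF F. revenue tstar \<pi>) = (INF \<pi>\<in>PiF F. (\<integral>x. x^2 \<partial>F))"
      by (rule INF_cong) (simp_all add: S.revenue_tstar)
    also have "\<dots> = (\<integral>x. x^2 \<partial>F)" using pi by (intro cINF_const) auto
    finally show ?thesis .
  qed
  show ?thesis using pi qstar_tstar_mech part3 part4 part5 by blast
qed

end
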